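(* Let a WIFS satisfy the $\Phi$-FNC for an iteration rule $\Phi$, with transition graph $\mathcal G$. Suppose every vertex of every non-essential loop class of $\mathcal G$ is a neighbour set of cardinality one. Then $\mathcal G$ is decomposable.
   Context: Setting. A weighted iterated function system (WIFS) $(S_i,p_i)_{i\in\mathcal I}$ consists of a finite index set $\mathcal I$, maps $S_i(x)=r_ix+d_i$ on $\mathbb R$ with $0<|r_i|<1$, and probabilities $p_i>0$ with $\sum_i p_i=1$. Its self-similar set $K$ is the unique nonempty compact set with $K=\bigcup_i S_i(K)$ and its self-similar measure $\mu$ is the unique Borel probability measure with $\mu(E)=\sum_i p_i\,\mu(S_i^{-1}(E))$. Standing assumptions: $K$ is not a singleton and its convex hull is $[0,1]$. For a finite word $\sigma=\sigma_1\cdots\sigma_n$ over $\mathcal I$ (the set of all finite words, including the empty word, is $\mathcal I^*$) put $S_\sigma=S_{\sigma_1}\circ\cdots\circ S_{\sigma_n}$, $p_\sigma=p_{\sigma_1}\cdots p_{\sigma_n}$ (identity and $1$ for the empty word). For a map $f$, $f\mu:=\mu\circ f^{-1}$. Iteration rules and net intervals. Fix a total order on the affine bijections $x\mapsto ax+b$ ($a\ne0$) of $\mathbb R$. For a closed interval $J$ let $T_J(x)=rx+c$ ($r>0$) be the map with $T_J([0,1])=J$. An iteration rule $\Phi$ assigns to each finite strictly increasing tuple $v=(f_1,\dots,f_m)$ of such maps a tuple $\Phi(v)=(\mathcal C_1,\dots,\mathcal C_m)$ of finite subsets of $\mathcal I^*$ such that for each $i$ and all large $n$ every word of length $n$ has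 a unique prefix in $\mathcal C_i$. Children of a pair $(\Delta,v)$, $\Delta=[a,b]$: let $\mathcal Y=\{T_\Delta\circ f_i\circ S_\tau:1\le i\le m,\tau\in\mathcal C_i\}$ and list $\{a,b\}\cup\{g(z):g\in\mathcal Y,z\in\{0,1\},g(z)\in\Delta\}$ as $a=y_1<\dots<y_{k+1}=b$; the children are the pairs $(\Delta',v')$ with $\Delta'=[y_j,y_{j+1}]$, $(y_j,y_{j+1})\cap K\ne\emptyset$, and $v'$ the increasing tuple of the distinct maps $T_{\Delta'}^{-1}\circ g$, $g\in\mathcal Y$, $g(K)\cap(y_j,y_{j+1})\ne\emptyset$. Let $\mathcal N_0=\{([0,1],(\mathrm{id}))\}$ and $\mathcal N_{n+1}$ the set of children of members of $\mathcal N_n$; second components are neighbour sets. $\Phi$ must also satisfy: (i) $\max\{r\,\mathrm{diam}\Delta:(\Delta,v)\in\mathcal N_n,(x\mapsto rx+c)\in v\}\to0$; (ii) if $f_1\neq f_2$ lie in a neighbour set then $f_1\circ S_\sigma\ne f_2$ for all $\sigma\in\mathcal I^*$. (Convention: a pair whose only child has the same interval is replaced by that child.) Transition graph. Children and their data depend only on $v$. The transition graph $\mathcal G$ has as vertices the neighbour sets occurring, root $v_{\mathrm{root}}=(\mathrm{id})$, and one edge $e$ from $v$ to $v'$ for each child $(\Delta',v')$ of a pair $(\Delta,v)$ (distinguished by the relative position of $\Delta'$ in $\Delta$), with transition matrix $T(e)$: for $v=(f_1,\dots,f_m)$, $v'=(g_1,\dots,g_n)$, $\Phi(v)=(\mathcal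 C_1,\dots,\mathcal C_m)$, $T(e)$ is the $m\times n$ matrix with $T(e)_{i,j}=\frac{f_i\mu((0,1))}{g_j\mu((0,1))}\sum p_\omega$ over $\omega\in\mathcal C_i$ with $T_\Delta\circ f_i\circ S_\omega=T_{\Delta'}\circ g_j$. For a path $\eta=(e_1,\dots,e_n)$, $T(\eta)=T(e_1)\cdots T(e_n)$ and $\|A\|$ = sum of entries. $\Omega^*$ is the set of finite paths starting at $v_{\mathrm{root}}$. The WIFS satisfies the $\Phi$-FNC if $\mathcal G$ is finite. A loop class is an induced subgraph $\mathcal L$ of $\mathcal G$ that is strongly connected, has at least one edge, and is maximal with these properties; it is essential if every vertex reachable by a directed path from a vertex of $\mathcal L$ lies in $\mathcal L$. Decomposability. A path with vertices $v_0,\dots,v_n$ is a transition path if $v_0$ lies in a loop class $\mathcal L_j$, $v_n$ in a loop class $\mathcal L_k$ with $k\ne j$, and $v_1,\dots,v_{n-1}$ lie in no loop class; it is an initial path if instead $v_0=v_{\mathrm{root}}$. Order the loop classes $\mathcal L_1,\dots,\mathcal L_m$ so that transition paths only go from $\mathcal L_i$ to $\mathcal L_j$ with $i<j$. Every $\eta\in\Omega^*$ is uniquely written $\eta=\phi\lambda_1\psi_1\cdots\psi_{m-1}\lambda_m$ with $\phi$ an initial path, $\lambda_i$ a path in $\mathcal L_i$, $\psi_i$ transition paths (all possibly empty); $\|T(\lambda_i)\|:=1$ for empty $\lambda_i$. $\mathcal G$ is decomposable if there is $C\ge1$, depending only on $\mathcal G$, with $C^{-1}\prod_i\|T(\lambda_i)\|\le\|T(\eta)\|\le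 C\prod_i\|T(\lambda_i)\|$ for all $\eta\in\Omega^*$. *)

theory Defs
  imports "HOL-Probability.Probability" "HOL-Library.Sublist"
begin

type_synonym amap = "real \<Rightarrow> real"
type_synonym npair = "(real \<times> real) \<times> amap set"   \<comment> \<open>(interval [a,b] as (a,b), neighbour set)\<close>
type_synonym mat = "amap \<Rightarrow> amap \<Rightarrow> real"       \<comment> \<open>matrix indexed by neighbour maps\<close>

definition amap :: "real \<Rightarrow> real \<Rightarrow> amap" where
  "amap a b = (\<lambda>x. a * x + b)"

definition affine_bij :: "amap set" where
  "affine_bij = {amap a b | a b. a \<noteq> 0}"

definition Smap :: "('i \<Rightarrow> real) \<Rightarrow> ('i \<Rightarrow> real) \<Rightarrow> 'i \<Rightarrow> amap" where
  "Smap r d i = amap (r i) (d i)"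

definition Sw :: "('i \<Rightarrow> real) \<Rightarrow> ('i \<Rightarrow> real) \<Rightarrow> 'i list \<Rightarrow> amap" where
  "Sw r d w = foldr (\<lambda>i f. Smap r d i \<circ> f) w id"

definition pw :: "('i \<Rightarrow> real) \<Rightarrow> 'i list \<Rightarrow> real" where
  "pw p w = prod_list (map p w)"

definition Tint :: "real \<times> real \<Rightarrow> amap" where
  "Tint J = amap (snd J - fst J) (fst J)"

definition Tinv :: "real \<times> real \<Rightarrow> amap" where
  "Tinv J = amap (1 / (snd J - fst J)) (- fst J / (snd J - fst J))"

definition Ymaps :: "('i \<Rightarrow> real) \<Rightarrow> ('i \<Rightarrow> real) \<Rightarrow> (amap set \<Rightarrow> amap \<Rightarrow> 'i list set)
    \<Rightarrow> real \<times> real \<Rightarrow> amap set \<Rightarrow> amap set" where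
  "Ymaps r d \<Phi> \<Delta> v = {Tint \<Delta> \<circ> f \<circ> Sw r d \<tau> | f \<tau>. f \<in> v \<and> \<tau> \<in> \<Phi> v f}"

definition cutpts :: "('i \<Rightarrow> real) \<Rightarrow> ('i \<Rightarrow> real) \<Rightarrow> (amap set \<Rightarrow> amap \<Rightarrow> 'i list set)
    \<Rightarrow> real \<times> real \<Rightarrow> amap set \<Rightarrow> real set" where
  "cutpts r d \<Phi> \<Delta> v = {fst \<Delta>, snd \<Delta>} \<union>
     {g z | g z. g \<in> Ymaps r d \<Phi> \<Delta> v \<and> z \<in> {0, 1} \<and> g z \<in> {fst \<Delta>..snd \<Delta>}}"

text \<open>Children before applying the replacement convention.\<close>
definition rchildren :: "('i \<Rightarrow> real) \<Rightarrow> ('i \<Rightarrow> real) \<Rightarrow> (amap set \<Rightarrow> amap \<Rightarrow> 'i list set)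
    \<Rightarrow> real set \<Rightarrow> npair \<Rightarrow> npair set" where
  "rchildren r d \<Phi> K c =
     {((y, y'), {Tinv (y, y') \<circ> g | g. g \<in> Ymaps r d \<Phi> (fst c) (snd c) \<and> g ` K \<inter> {y<..<y'} \<noteq> {}})
      | y y'. y \<in> cutpts r d \<Phi> (fst c) (snd c) \<and> y' \<in> cutpts r d \<Phi> (fst c) (snd c) \<and> y < y'
        \<and> {y<..<y'} \<inter> cutpts r d \<Phi> (fst c) (snd c) = {} \<and> {y<..<y'} \<inter> K \<noteq> {}}"

text \<open>Convention: a pair whose only child has the same interval is replaced by that child.\<close>
definition same_step :: "('i \<Rightarrow> real) \<Rightarrow> ('i \<Rightarrow> real) \<Rightarrow> (amap set \<Rightarrow> amap \<Rightarrow> 'i list set)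
    \<Rightarrow> real set \<Rightarrow> npair \<Rightarrow> npair \<Rightarrow> bool" where
  "same_step r d \<Phi> K c c' \<longleftrightarrow> rchildren r d \<Phi> K c = {c'} \<and> fst c' = fst c"

definition is_chain :: "('i \<Rightarrow> real) \<Rightarrow> ('i \<Rightarrow> real) \<Rightarrow> (amap set \<Rightarrow> amap \<Rightarrow> 'i list set)
    \<Rightarrow> real set \<Rightarrow> npair list \<Rightarrow> bool" where
  "is_chain r d \<Phi> K ch \<longleftrightarrow> ch \<noteq> [] \<and>
     (\<forall>i. Suc i < length ch \<longrightarrow> same_step r d \<Phi> K (ch ! i) (ch ! Suc i)) \<and>
     \<not> (\<exists>c'. same_step r d \<Phi> K (last ch) c')"

definition children :: "('i \<Rightarrow> real) \<Rightarrow> ('i \<Rightarrow> real) \<Rightarrow> (amap set \<Rightarrow> amap \<Rightarrow> 'i list set)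
    \<Rightarrow> real set \<Rightarrow> npair \<Rightarrow> npair set" where
  "children r d \<Phi> K c = {last ch | ch. is_chain r d \<Phi> K ch \<and> hd ch \<in> rchildren r d \<Phi> K c}"

primrec gen :: "('i \<Rightarrow> real) \<Rightarrow> ('i \<Rightarrow> real) \<Rightarrow> (amap set \<Rightarrow> amap \<Rightarrow> 'i list set)
    \<Rightarrow> real set \<Rightarrow> nat \<Rightarrow> npair set" where
  "gen r d \<Phi> K 0 = {((0, 1), {id})}"
| "gen r d \<Phi> K (Suc n) = (\<Union>c \<in> gen r d \<Phi> K n. children r d \<Phi> K c)"

definition iteration_rule :: "'i set \<Rightarrow> ('i \<Rightarrow> real) \<Rightarrow> ('i \<Rightarrow> real) \<Rightarrow> real set
    \<Rightarrow> (amap set \<Rightarrow> amap \<Rightarrow> 'i list set) \<Rightarrow> bool" where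
  "iteration_rule I r d K \<Phi> \<longleftrightarrow>
     (\<forall>v f. finite v \<and> v \<subseteq> affine_bij \<and> f \<in> v \<longrightarrow>
        finite (\<Phi> v f) \<and> \<Phi> v f \<subseteq> lists I \<and>
        (\<exists>N. \<forall>n\<ge>N. \<forall>w \<in> lists I. length w = n \<longrightarrow> (\<exists>!u. u \<in> \<Phi> v f \<and> prefix u w))) \<and>
     \<comment> \<open>(i): max of |slope f| * diam Delta over N_n tends to 0\<close>
     (\<forall>\<epsilon>>0. \<exists>N. \<forall>n\<ge>N. \<forall>c \<in> gen r d \<Phi> K n. \<forall>f \<in> snd c.
        \<bar>f 1 - f 0\<bar> * (snd (fst c) - fst (fst c)) < \<epsilon>) \<and>
     \<comment> \<open>(ii)\<close>
     (\<forall>n. \<forall>c \<in> gen r d \<Phi> K n. \<forall>f1 \<in> snd c. \<forall>f2 \<in> snd c. f1 \<noteq> f2 \<longrightarrow>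
        (\<forall>\<sigma> \<in> lists I. f1 \<circ> Sw r d \<sigma> \<noteq> f2))"

definition idm :: mat where
  "idm = (\<lambda>f g. if f = g then 1 else 0)"

definition mmul :: "amap set \<Rightarrow> mat \<Rightarrow> mat \<Rightarrow> mat" where
  "mmul V A B = (\<lambda>f h. \<Sum>g\<in>V. A f g * B g h)"

definition rawmat :: "real measure \<Rightarrow> ('i \<Rightarrow> real) \<Rightarrow> ('i \<Rightarrow> real) \<Rightarrow> ('i \<Rightarrow> real)
    \<Rightarrow> (amap set \<Rightarrow> amap \<Rightarrow> 'i list set) \<Rightarrow> npair \<Rightarrow> npair \<Rightarrow> mat" where
  "rawmat \<mu> p r d \<Phi> c c' = (\<lambda>f g.
     if f \<in> snd c \<and> g \<in> snd c' then
       measure \<mu> (f -` {0<..<1}) / measure \<mu> (g -` {0<..<1}) *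
       (\<Sum>\<omega> \<in> {\<omega> \<in> \<Phi> (snd c) f. Tint (fst c) \<circ> f \<circ> Sw r d \<omega> = Tint (fst c') \<circ> g}. pw p \<omega>)
     else 0)"

primrec chainmat :: "real measure \<Rightarrow> ('i \<Rightarrow> real) \<Rightarrow> ('i \<Rightarrow> real) \<Rightarrow> ('i \<Rightarrow> real)
    \<Rightarrow> (amap set \<Rightarrow> amap \<Rightarrow> 'i list set) \<Rightarrow> npair \<Rightarrow> npair list \<Rightarrow> mat" where
  "chainmat \<mu> p r d \<Phi> c [] = idm"
| "chainmat \<mu> p r d \<Phi> c (c' # cs) = mmul (snd c') (rawmat \<mu> p r d \<Phi> c c') (chainmat \<mu> p r d \<Phi> c' cs)"

definition relpos :: "real \<times> real \<Rightarrow> real \<times> real \<Rightarrow> real \<times> real" where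
  "relpos \<Delta> \<Delta>' = ((fst \<Delta>' - fst \<Delta>) / (snd \<Delta> - fst \<Delta>), (snd \<Delta>' - fst \<Delta>) / (snd \<Delta> - fst \<Delta>))"

text \<open>Edges: (source, relative position of the child interval, target, transition matrix).\<close>
type_synonym tedge = "amap set \<times> (real \<times> real) \<times> amap set \<times> mat"

definition esrc :: "tedge \<Rightarrow> amap set" where "esrc e = fst e"
definition etgt :: "tedge \<Rightarrow> amap set" where "etgt e = fst (snd (snd e))"
definition emat :: "tedge \<Rightarrow> mat" where "emat e = snd (snd (snd e))"

definition tverts :: "('i \<Rightarrow> real) \<Rightarrow> ('i \<Rightarrow> real) \<Rightarrow> (amap set \<Rightarrow> amap \<Rightarrow> 'i list set)
    \<Rightarrow> real set \<Rightarrow> amap set set" where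
  "tverts r d \<Phi> K = {snd c | n c. c \<in> gen r d \<Phi> K n}"

definition tedges :: "real measure \<Rightarrow> ('i \<Rightarrow> real) \<Rightarrow> ('i \<Rightarrow> real) \<Rightarrow> ('i \<Rightarrow> real)
    \<Rightarrow> (amap set \<Rightarrow> amap \<Rightarrow> 'i list set) \<Rightarrow> real set \<Rightarrow> tedge set" where
  "tedges \<mu> p r d \<Phi> K =
     {(snd c, relpos (fst c) (fst (last ch)), snd (last ch),
       (\<lambda>f g. if f \<in> snd c \<and> g \<in> snd (last ch) then chainmat \<mu> p r d \<Phi> c ch f g else 0))
      | n c ch. c \<in> gen r d \<Phi> K n \<and> is_chain r d \<Phi> K ch \<and> hd ch \<in> rchildren r d \<Phi> K c}"

definition is_path :: "tedge set \<Rightarrow> tedge list \<Rightarrow> bool" where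
  "is_path E es \<longleftrightarrow> set es \<subseteq> E \<and> (\<forall>i. Suc i < length es \<longrightarrow> etgt (es ! i) = esrc (es ! Suc i))"

definition Omega :: "tedge set \<Rightarrow> tedge list set" where
  "Omega E = {es. is_path E es \<and> (es \<noteq> [] \<longrightarrow> esrc (hd es) = {id})}"

primrec pathmat :: "tedge list \<Rightarrow> mat" where
  "pathmat [] = idm"
| "pathmat (e # es) = mmul (etgt e) (emat e) (pathmat es)"

definition pnorm :: "tedge list \<Rightarrow> real" where
  "pnorm es = (if es = [] then 1 else
     (\<Sum>f \<in> esrc (hd es). \<Sum>g \<in> etgt (last es). pathmat es f g))"

definition eadj :: "tedge set \<Rightarrow> amap set set \<Rightarrow> (amap set \<times> amap set) set" where
  "eadj E L = {(esrc e, etgt e) | e. e \<in> E \<and> esrc e \<in> L \<and> etgt e \<in> L}"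

definition strongly_conn :: "tedge set \<Rightarrow> amap set set \<Rightarrow> bool" where
  "strongly_conn E L \<longleftrightarrow> (\<forall>u\<in>L. \<forall>w\<in>L. (u, w) \<in> (eadj E L)\<^sup>*)"

definition has_edge_in :: "tedge set \<Rightarrow> amap set set \<Rightarrow> bool" where
  "has_edge_in E L \<longleftrightarrow> (\<exists>e\<in>E. esrc e \<in> L \<and> etgt e \<in> L)"

definition loop_class :: "amap set set \<Rightarrow> tedge set \<Rightarrow> amap set set \<Rightarrow> bool" where
  "loop_class V E L \<longleftrightarrow> L \<subseteq> V \<and> strongly_conn E L \<and> has_edge_in E L \<and>
     (\<forall>L'. L \<subset> L' \<and> L' \<subseteq> V \<longrightarrow> \<not> (strongly_conn E L' \<and> has_edge_in E L'))"

definition essential :: "amap set set \<Rightarrow> tedge set \<Rightarrow> amap set set \<Rightarrow> bool" where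
  "essential V E L \<longleftrightarrow> (\<forall>u\<in>L. \<forall>w. (u, w) \<in> (eadj E V)\<^sup>* \<longrightarrow> w \<in> L)"

definition piece :: "amap set set \<Rightarrow> tedge list \<Rightarrow> tedge list" where
  "piece L es = filter (\<lambda>e. esrc e \<in> L \<and> etgt e \<in> L) es"

definition decomposable :: "amap set set \<Rightarrow> tedge set \<Rightarrow> bool" where
  "decomposable V E \<longleftrightarrow> (\<exists>C\<ge>1. \<forall>\<eta> \<in> Omega E.
     (\<Prod>L \<in> {L. loop_class V E L}. pnorm (piece L \<eta>)) / C \<le> pnorm \<eta> \<and>
     pnorm \<eta> \<le> C * (\<Prod>L \<in> {L. loop_class V E L}. pnorm (piece L \<eta>)))"

definition Phi_FNC :: "real measure \<Rightarrow> ('i \<Rightarrow> real) \<Rightarrow> ('i \<Rightarrow> real) \<Rightarrow> ('i \<Rightarrow> real)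
    \<Rightarrow> (amap set \<Rightarrow> amap \<Rightarrow> 'i list set) \<Rightarrow> real set \<Rightarrow> bool" where
  "Phi_FNC \<mu> p r d \<Phi> K \<longleftrightarrow> finite (tverts r d \<Phi> K) \<and> finite (tedges \<mu> p r d \<Phi> K)"

end

theory Submission
  imports Defs
begin


lemma pathmat_nonneg:
  "(\<forall>e\<in>set es. \<forall>f g. 0 \<le> emat e f g) \<Longrightarrow> 0 \<le> pathmat es f g"
proof (induction es arbitrary: f g)
  case Nil then show ?case by (simp add: idm_def)
next
  case (Cons a es) then show ?case
    by (simp add: mmul_def sum_nonneg)
qed

lemma pathmat_single:
  assumes "finite (etgt e)" "\<forall>f g. emat e f g \<noteq> 0 \<longrightarrow> g \<in> etgt e"
  shows "pathmat [e] f h = emat e f h"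
proof -
  have "pathmat [e] f h = (\<Sum>g\<in>etgt e. emat e f g * (if g = h then 1 else 0))"
    by (simp add: mmul_def idm_def)
  also have "\<dots> = (if h \<in> etgt e then emat e f h else 0)"
    using assms(1) by (simp add: if_distrib cong: if_cong)
  also have "\<dots> = emat e f h" using assms(2) by auto
  finally show ?thesis .
qed

lemma pathmat_snoc:
  assumes "es \<noteq> []" "\<forall>a\<in>set (es @ [e]). finite (etgt a) \<and> (\<forall>f g. emat a f g \<noteq> 0 \<longrightarrow> g \<in> etgt a)"
  shows "pathmat (es @ [e]) f h = (\<Sum>g\<in>etgt (last es). pathmat es f g * emat e g h)"
  using assms
proof (induction es arbitrary: f)
  case Nil then show ?case by simp
next
  case (Cons a es)
  show ?case
  proof (cases "es = []")
    case True
    have "pathmat [a, e] f h = (\<Sum>g\<in>etgt a. emat a f g * pathmat [e] g h)"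
      by (simp add: mmul_def)
    also have "\<dots> = (\<Sum>g\<in>etgt a. pathmat [a] f g * emat e g h)"
    proof -
      have "\<And>g. pathmat [e] g h = emat e g h" "\<And>g. pathmat [a] f g = emat a f g"
        using Cons.prems pathmat_single by auto
      then show ?thesis by simp
    qed
    finally show ?thesis using True by simp
  next
    case False
    have IH: "\<And>g. pathmat (es @ [e]) g h = (\<Sum>k\<in>etgt (last es). pathmat es g k * emat e k h)"
      using Cons False by simp
    have "pathmat ((a # es) @ [e]) f h = (\<Sum>g\<in>etgt a. emat a f g * pathmat (es @ [e]) g h)"
      by (simp add: mmul_def)
    also have "\<dots> = (\<Sum>g\<in>etgt a. \<Sum>k\<in>etgt (last es). emat a f g * (pathmat es g k * emat e k h))"
      by (simp add: IH sum_distrib_left)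
    also have "\<dots> = (\<Sum>k\<in>etgt (last es). \<Sum>g\<in>etgt a. emat a f g * pathmat es g k * emat e k h)"
      by (subst sum.swap) (simp add: mult.assoc)
    also have "\<dots> = (\<Sum>k\<in>etgt (last (a # es)). pathmat (a # es) f k * emat e k h)"
      using False by (simp add: mmul_def sum_distrib_right)
    finally show ?thesis .
  qed
qed

definition inL :: "amap set set \<Rightarrow> tedge \<Rightarrow> bool" where
  "inL L e \<longleftrightarrow> esrc e \<in> L \<and> etgt e \<in> L"

lemma piece_snoc: "piece L (es @ [e]) = piece L es @ (if inL L e then [e] else [])"
  by (simp add: piece_def inL_def)

lemma piece_Nil[simp]: "piece L [] = []" by (simp add: piece_def)

lemma is_path_snocD:
  assumes "is_path E (es @ [e])"
  shows "is_path E es" "e \<in> E" "es \<noteq> [] \<Longrightarrow> etgt (last es) = esrc e"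
proof -
  show "is_path E es" using assms unfolding is_path_def
  proof (intro conjI allI impI)
    fix i assume h: "set (es @ [e]) \<subseteq> E \<and> (\<forall>i. Suc i < length (es @ [e]) \<longrightarrow> etgt ((es @ [e]) ! i) = esrc ((es @ [e]) ! Suc i))"
      "Suc i < length es"
    then show "etgt (es ! i) = esrc (es ! Suc i)"
      by (metis (no_types, lifting) Suc_lessD length_append_singleton less_SucI nth_append)
  qed auto
  show "e \<in> E" using assms by (simp add: is_path_def)
  assume ne: "es \<noteq> []"
  have "Suc (length es - 1) < length (es @ [e])" using ne by simp
  then have "etgt ((es @ [e]) ! (length es - 1)) = esrc ((es @ [e]) ! Suc (length es - 1))"
    using assms by (simp add: is_path_def)
  then show "etgt (last es) = esrc e" using ne
    by (simp add: nth_append last_conv_nth)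
qed

definition rowv :: "tedge list \<Rightarrow> amap \<Rightarrow> real" where
  "rowv es g = (if es = [] then (if g = id then 1 else 0) else (\<Sum>f\<in>esrc (hd es). pathmat es f g))"

definition endv :: "tedge list \<Rightarrow> amap set" where
  "endv es = (if es = [] then {id} else etgt (last es))"

lemma pnorm_rowv: "es \<noteq> [] \<Longrightarrow> pnorm es = (\<Sum>g\<in>etgt (last es). rowv es g)"
  unfolding pnorm_def rowv_def by (simp add: sum.swap[of _ "esrc (hd es)"])

lemma rowv_snoc:
  assumes "es \<noteq> []" "\<forall>a\<in>set (es @ [e]). finite (etgt a) \<and> (\<forall>f g. emat a f g \<noteq> 0 \<longrightarrow> g \<in> etgt a)"
  shows "rowv (es @ [e]) h = (\<Sum>g\<in>etgt (last es). rowv es g * emat e g h)"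
proof -
  have "rowv (es @ [e]) h = (\<Sum>f\<in>esrc (hd es). \<Sum>g\<in>etgt (last es). pathmat es f g * emat e g h)"
    using assms by (simp add: rowv_def pathmat_snoc)
  also have "\<dots> = (\<Sum>g\<in>etgt (last es). rowv es g * emat e g h)"
    using assms(1) by (simp add: rowv_def sum_distrib_right sum.swap[of _ "esrc (hd es)"])
  finally show ?thesis .
qed

lemma rowv_single:
  assumes "finite (etgt e)" "\<forall>f g. emat e f g \<noteq> 0 \<longrightarrow> g \<in> etgt e"
  shows "rowv [e] h = (\<Sum>f\<in>esrc e. emat e f h)"
proof -
  have "\<And>f. pathmat [e] f h = emat e f h" using assms pathmat_single by auto
  then show ?thesis by (simp add: rowv_def del: pathmat.simps)
qed

lemma eadj_iff: "(a, b) \<in> eadj E L \<longleftrightarrow> (\<exists>e\<in>E. esrc e = a \<and> etgt e = b \<and> a \<in> L \<and> b \<in> L)"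
  unfolding eadj_def by blast

locale absG =
  fixes V :: "amap set set" and E :: "tedge set"
  assumes finV: "finite V" and finE: "finite E"
    and eV: "\<forall>e\<in>E. esrc e \<in> V \<and> etgt e \<in> V"
    and vfin: "\<forall>v\<in>V. finite v \<and> v \<noteq> {}"
    and enn: "\<forall>e\<in>E. \<forall>f g. 0 \<le> emat e f g"
    and esupp: "\<forall>e\<in>E. \<forall>f g. emat e f g \<noteq> 0 \<longrightarrow> f \<in> esrc e \<and> g \<in> etgt e"
    and ecol: "\<forall>e\<in>E. \<forall>g\<in>etgt e. 0 < (\<Sum>f\<in>esrc e. emat e f g)"
    and single: "\<forall>L. loop_class V E L \<and> \<not> essential V E L \<longrightarrow> (\<forall>v\<in>L. card v = 1)"
begin

abbreviation "RR \<equiv> eadj E V"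

lemma RR_V: "(a, b) \<in> RR \<Longrightarrow> a \<in> V \<and> b \<in> V"
  by (auto simp: eadj_iff)

lemma RRs_V: "(a, b) \<in> RR\<^sup>* \<Longrightarrow> a \<in> V \<Longrightarrow> b \<in> V"
  by (induction rule: rtrancl_induct) (auto dest: RR_V)

lemma edge_RR: "e \<in> E \<Longrightarrow> (esrc e, etgt e) \<in> RR"
  using eV unfolding eadj_iff by blast

lemma eadj_mono: "L \<subseteq> V \<Longrightarrow> (eadj E L)\<^sup>* \<subseteq> RR\<^sup>*"
proof (rule rtrancl_mono, rule subrelI)
  fix a b assume "L \<subseteq> V" "(a, b) \<in> eadj E L"
  then show "(a, b) \<in> RR" unfolding eadj_iff by blast
qed

lemma scc_conn:
  assumes S: "S = {z\<in>V. (a, z) \<in> RR\<^sup>* \<and> (z, a) \<in> RR\<^sup>*}"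
  shows "strongly_conn E S"
proof -
  have aux: "(u, z) \<in> RR\<^sup>* \<Longrightarrow> u \<in> S \<Longrightarrow> z \<in> S \<longrightarrow> (u, z) \<in> (eadj E S)\<^sup>*" for u z
  proof (induction rule: rtrancl_induct)
    case base then show ?case by simp
  next
    case (step y z)
    show ?case
    proof
      assume zS: "z \<in> S"
      have yS: "y \<in> S"
      proof -
        have "y \<in> V" using step(2) RR_V by blast
        moreover have "(a, y) \<in> RR\<^sup>*" using step(1,4) S by auto
        moreover have "(y, a) \<in> RR\<^sup>*" using step(2) zS S by auto
        ultimately show ?thesis using S by blast
      qed
      have "(y, z) \<in> eadj E S" using step(2) yS zS by (auto simp: eadj_iff)
      then show "(u, z) \<in> (eadj E S)\<^sup>*" using step yS by auto
    qed
  qed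
  show ?thesis unfolding strongly_conn_def
  proof (intro ballI)
    fix u w assume "u \<in> S" "w \<in> S"
    then have "(u, w) \<in> RR\<^sup>*" using S by auto
    then show "(u, w) \<in> (eadj E S)\<^sup>*" using aux \<open>u \<in> S\<close> \<open>w \<in> S\<close> by blast
  qed
qed

lemma class_closed:
  assumes L: "loop_class V E L" and a: "a \<in> L" and b: "b \<in> L"
    and az: "(a, z) \<in> RR\<^sup>*" and zb: "(z, b) \<in> RR\<^sup>*"
  shows "z \<in> L"
proof -
  define S where "S = {z\<in>V. (a, z) \<in> RR\<^sup>* \<and> (z, a) \<in> RR\<^sup>*}"
  have LV: "L \<subseteq> V" using L by (simp add: loop_class_def)
  have LS: "L \<subseteq> S"
  proof
    fix l assume l: "l \<in> L"
    have "(a, l) \<in> (eadj E L)\<^sup>*" "(l, a) \<in> (eadj E L)\<^sup>*"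
      using L a l by (auto simp: loop_class_def strongly_conn_def)
    then show "l \<in> S" using eadj_mono[OF LV] l LV by (auto simp: S_def)
  qed
  have scS: "strongly_conn E S" using scc_conn S_def by blast
  have heS: "has_edge_in E S" using L LS by (auto simp: loop_class_def has_edge_in_def)
  have SV: "S \<subseteq> V" by (auto simp: S_def)
  have "\<not> L \<subset> S" using L scS heS SV by (auto simp: loop_class_def)
  then have "L = S" using LS by blast
  moreover have "z \<in> S"
  proof -
    have "a \<in> V" using a LV by auto
    then have "z \<in> V" using az RRs_V by blast
    moreover have "(b, a) \<in> RR\<^sup>*" using L a b eadj_mono[OF LV] by (auto simp: loop_class_def strongly_conn_def)
    ultimately show ?thesis using az zb by (auto simp: S_def)
  qed
  ultimately show ?thesis by simp
qed

lemma class_disj: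
  assumes "loop_class V E L1" "loop_class V E L2" "v \<in> L1" "v \<in> L2"
  shows "L1 = L2"
proof -
  have *: "L2 \<subseteq> L1" if "loop_class V E L1" "loop_class V E L2" "v \<in> L1" "v \<in> L2" for L1 L2
  proof
    fix z assume z: "z \<in> L2"
    have LV: "L2 \<subseteq> V" using that by (simp add: loop_class_def)
    have "(v, z) \<in> (eadj E L2)\<^sup>*" "(z, v) \<in> (eadj E L2)\<^sup>*"
      using that z by (auto simp: loop_class_def strongly_conn_def)
    then have "(v, z) \<in> RR\<^sup>*" "(z, v) \<in> RR\<^sup>*" using eadj_mono[OF LV] by auto
    then show "z \<in> L1" using class_closed that by blast
  qed
  show ?thesis using *[of L1 L2] *[of L2 L1] assms by blast
qed

lemma exists_class:
  assumes e: "e \<in> E" and bk: "(etgt e, esrc e) \<in> RR\<^sup>*"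
  shows "\<exists>L. loop_class V E L \<and> inL L e"
proof -
  define S where "S = {z\<in>V. (esrc e, z) \<in> RR\<^sup>* \<and> (z, esrc e) \<in> RR\<^sup>*}"
  have sS: "esrc e \<in> S" and tS: "etgt e \<in> S"
    using e eV edge_RR[OF e] bk by (auto simp: S_def)
  define F where "F = {L'. S \<subseteq> L' \<and> L' \<subseteq> V \<and> strongly_conn E L' \<and> has_edge_in E L'}"
  have SF: "S \<in> F" using scc_conn[OF S_def] sS tS e
    by (auto simp: F_def S_def has_edge_in_def)
  have finF: "finite F" by (rule finite_subset[of F "Pow V"]) (auto simp: F_def finV)
  define k where "k = Max (card ` F)"
  have "k \<in> card ` F" unfolding k_def using finF SF by (intro Max_in) auto
  then obtain L where LF: "L \<in> F" and kL: "card L = k" by auto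
  have maxk: "\<And>L'. L' \<in> F \<Longrightarrow> card L' \<le> k" unfolding k_def using finF by auto
  have "loop_class V E L"
    unfolding loop_class_def
  proof (intro conjI allI impI)
    show "L \<subseteq> V" "strongly_conn E L" "has_edge_in E L" using LF by (auto simp: F_def)
    fix L' assume h: "L \<subset> L' \<and> L' \<subseteq> V"
    show "\<not> (strongly_conn E L' \<and> has_edge_in E L')"
    proof
      assume "strongly_conn E L' \<and> has_edge_in E L'"
      then have "L' \<in> F" using h LF by (auto simp: F_def)
      then have "card L' \<le> card L" using maxk kL by auto
      moreover have "card L < card L'" using h finV by (meson finite_subset psubset_card_mono)
      ultimately show False by simp
    qed
  qed
  moreover have "inL L e" using LF sS tS by (auto simp: F_def inL_def)
  ultimately show ?thesis by blast
qed

lemma reach_tgt: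
  "is_path E es \<Longrightarrow> e' \<in> set es \<Longrightarrow> (etgt e', etgt (last es)) \<in> RR\<^sup>*"
proof (induction es rule: rev_induct)
  case Nil then show ?case by simp
next
  case (snoc e es)
  note d = is_path_snocD[OF snoc.prems(1)]
  show ?case
  proof (cases "e' = e")
    case True then show ?thesis by simp
  next
    case False
    then have "e' \<in> set es" "es \<noteq> []" using snoc.prems by auto
    then have "(etgt e', etgt (last es)) \<in> RR\<^sup>*" using snoc.IH d by blast
    then show ?thesis using d edge_RR[OF d(2)] \<open>es \<noteq> []\<close> by simp
  qed
qed

lemma reach_src:
  "is_path E es \<Longrightarrow> e' \<in> set es \<Longrightarrow> (esrc e', esrc (last es)) \<in> RR\<^sup>*"
proof (induction es rule: rev_induct)
  case Nil then show ?case by simp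
next
  case (snoc e es)
  note d = is_path_snocD[OF snoc.prems(1)]
  show ?case
  proof (cases "e' = e")
    case True then show ?thesis by simp
  next
    case False
    then have "e' \<in> set es" "es \<noteq> []" using snoc.prems by auto
    then have "(esrc e', esrc (last es)) \<in> RR\<^sup>*" using snoc.IH d by blast
    moreover have "last es \<in> E" using d(1) \<open>es \<noteq> []\<close> by (auto simp: is_path_def)
    ultimately show ?thesis using d edge_RR \<open>es \<noteq> []\<close>
      by (metis last_snoc rtrancl.rtrancl_into_rtrancl)
  qed
qed

definition istr :: "tedge \<Rightarrow> bool" where
  "istr e \<longleftrightarrow> \<not> (\<exists>L. loop_class V E L \<and> inL L e)"

definition isess :: "tedge \<Rightarrow> bool" where
  "isess e \<longleftrightarrow> (\<exists>L. loop_class V E L \<and> essential V E L \<and> inL L e)"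

lemma tr_distinct: "is_path E es \<Longrightarrow> distinct (map esrc (filter istr es))"
proof (induction es rule: rev_induct)
  case Nil then show ?case by simp
next
  case (snoc e es)
  note d = is_path_snocD[OF snoc.prems(1)]
  have "esrc e \<notin> esrc ` set (filter istr es)" if tr: "istr e"
  proof
    assume "esrc e \<in> esrc ` set (filter istr es)"
    then obtain e' where e': "e' \<in> set es" "istr e'" "esrc e' = esrc e" by auto
    then have ne: "es \<noteq> []" by auto
    have "(etgt e', etgt (last es)) \<in> RR\<^sup>*" using reach_tgt d(1) e'(1) by blast
    then have "(etgt e', esrc e') \<in> RR\<^sup>*" using d(3)[OF ne] e'(3) by simp
    moreover have "e' \<in> E" using d(1) e'(1) by (auto simp: is_path_def)
    ultimately show False using exists_class e'(2) by (auto simp: istr_def)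
  qed
  then show ?case using snoc.IH d by auto
qed

lemma tr_count: "is_path E es \<Longrightarrow> length (filter istr es) \<le> card V"
proof -
  assume p: "is_path E es"
  have "length (filter istr es) = length (map esrc (filter istr es))" by simp
  also have "\<dots> = card (set (map esrc (filter istr es)))"
    by (rule distinct_card[symmetric]) (rule tr_distinct[OF p])
  also have "\<dots> \<le> card V"
    using p eV finV by (intro card_mono) (auto simp: is_path_def)
  finally show ?thesis .
qed


definition "LC = {L. loop_class V E L}"
definition "Pr es = (\<Prod>L\<in>LC. pnorm (piece L es))"
definition "Qp L es = (\<Prod>L'\<in>LC - {L}. pnorm (piece L' es))"
definition "nt es = length (filter istr es)"
definition "colsum e g = (\<Sum>f\<in>esrc e. emat e f g)"
definition "mm = Min (insert 1 ((\<lambda>(e, g). colsum e g) ` (SIGMA e:E. etgt e)))"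
definition "BB = Max (insert 1 ((\<lambda>(e, f, g). emat e f g) ` (SIGMA e:E. esrc e \<times> etgt e)))"
definition "NN = Max (insert 1 (card ` V))"
definition "HH = NN * BB"
definition "kk = card V"

lemma finLC: "finite LC"
  by (rule finite_subset[of _ "Pow V"]) (auto simp: LC_def loop_class_def finV)

lemma fin_cs: "finite ((\<lambda>(e, g). colsum e g) ` (SIGMA e:E. etgt e))"
  using finE eV vfin by (intro finite_imageI finite_SigmaI) auto

lemma mm_pos: "0 < mm"
proof -
  let ?A = "insert 1 ((\<lambda>(e, g). colsum e g) ` (SIGMA e:E. etgt e))"
  have "\<forall>x\<in>?A. 0 < x" using ecol by (auto simp: colsum_def)
  moreover have "finite ?A" using fin_cs by blast
  ultimately show ?thesis unfolding mm_def using Min_gr_iff[of ?A 0] by blast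
qed

lemma mm_le1: "mm \<le> 1"
  unfolding mm_def using fin_cs by (intro Min_le) auto

lemma mm_le: "e \<in> E \<Longrightarrow> g \<in> etgt e \<Longrightarrow> mm \<le> colsum e g"
  unfolding mm_def using fin_cs by (intro Min_le) auto

lemma BB_ge: "e \<in> E \<Longrightarrow> emat e f g \<le> BB"
proof -
  assume e: "e \<in> E"
  have fin: "finite ((\<lambda>(e, f, g). emat e f g) ` (SIGMA e:E. esrc e \<times> etgt e))"
    using finE eV vfin by (intro finite_imageI finite_SigmaI) auto
  show ?thesis
  proof (cases "f \<in> esrc e \<and> g \<in> etgt e")
    case True
    then have "emat e f g \<in> (\<lambda>(e, f, g). emat e f g) ` (SIGMA e:E. esrc e \<times> etgt e)"
      using e by (auto intro!: image_eqI[where x="(e, f, g)"])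
    then show ?thesis unfolding BB_def using fin by (intro Max_ge) auto
  next
    case False
    then have "emat e f g = 0" using esupp e by blast
    moreover have "1 \<le> BB" unfolding BB_def using fin by (intro Max_ge) auto
    ultimately show ?thesis by simp
  qed
qed

lemma BB_ge1: "1 \<le> BB"
proof -
  have fin: "finite ((\<lambda>(e, f, g). emat e f g) ` (SIGMA e:E. esrc e \<times> etgt e))"
    using finE eV vfin by (intro finite_imageI finite_SigmaI) auto
  show ?thesis unfolding BB_def using fin by (intro Max_ge) auto
qed

lemma NN_ge: "v \<in> V \<Longrightarrow> card v \<le> NN"
  unfolding NN_def using finV by (intro Max_ge) auto

lemma NN_ge1: "1 \<le> NN"
  unfolding NN_def using finV by (intro Max_ge) auto

lemma HH_ge1: "1 \<le> HH"
  unfolding HH_def using NN_ge1 BB_ge1 mult_mono[of 1 NN 1 BB] by simp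

lemma Pr_split: "L \<in> LC \<Longrightarrow> Pr es = pnorm (piece L es) * Qp L es"
  unfolding Pr_def Qp_def using finLC by (simp add: prod.remove)

lemma piece_sub: "set (piece L es) \<subseteq> set es"
  by (auto simp: piece_def)

lemma pnorm_nonneg: "set es \<subseteq> E \<Longrightarrow> 0 \<le> pnorm es"
  unfolding pnorm_def using enn
  by (auto intro!: sum_nonneg pathmat_nonneg)

lemma rowv_nonneg: "set es \<subseteq> E \<Longrightarrow> 0 \<le> rowv es g"
  unfolding rowv_def using enn
  by (auto intro!: sum_nonneg pathmat_nonneg)

lemma Pr_nonneg: "set es \<subseteq> E \<Longrightarrow> 0 \<le> Pr es"
  unfolding Pr_def using piece_sub by (auto intro!: prod_nonneg pnorm_nonneg)

lemma Qp_nonneg: "set es \<subseteq> E \<Longrightarrow> 0 \<le> Qp L es"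
  unfolding Qp_def using piece_sub by (auto intro!: prod_nonneg pnorm_nonneg)

lemma wfE: "set es \<subseteq> E \<Longrightarrow> \<forall>a\<in>set es. finite (etgt a) \<and> (\<forall>f g. emat a f g \<noteq> 0 \<longrightarrow> g \<in> etgt a)"
  using eV vfin esupp by blast

lemma last_filter: "P (last xs) \<Longrightarrow> xs \<noteq> [] \<Longrightarrow> last (filter P xs) = last xs"
  by (induction xs rule: rev_induct) auto

lemma Omega_snocD:
  assumes "es @ [e] \<in> Omega E"
  shows "es \<in> Omega E" "e \<in> E" "set es \<subseteq> E" "endv es = esrc e"
proof -
  have p: "is_path E (es @ [e])" and h: "esrc (hd (es @ [e])) = {id}" using assms by (auto simp: Omega_def)
  note d = is_path_snocD[OF p]
  show "es \<in> Omega E" using d(1) h by (cases es) (auto simp: Omega_def)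
  show "e \<in> E" by (rule d(2))
  show "set es \<subseteq> E" using d(1) by (simp add: is_path_def)
  show "endv es = esrc e" using d(3) h by (cases "es = []") (auto simp: endv_def)
qed

lemma x_snoc:
  assumes "es @ [e] \<in> Omega E"
  shows "rowv (es @ [e]) h = (\<Sum>g\<in>esrc e. rowv es g * emat e g h)"
proof (cases "es = []")
  case True
  have e: "e \<in> E" and src: "esrc e = {id}" using Omega_snocD[OF assms] True by (auto simp: endv_def)
  have "rowv [e] h = (\<Sum>f\<in>esrc e. emat e f h)" using wfE[of "[e]"] e by (intro rowv_single) auto
  then show ?thesis using True src by (simp add: rowv_def)
next
  case False
  note d = Omega_snocD[OF assms]
  have "rowv (es @ [e]) h = (\<Sum>g\<in>etgt (last es). rowv es g * emat e g h)"
    using False d wfE[of "es @ [e]"] by (intro rowv_snoc) auto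
  then show ?thesis using d(4) False by (simp add: endv_def)
qed

definition "InvA es \<longleftrightarrow> (\<forall>e\<in>set es. \<not> isess e) \<and>
   (\<forall>g\<in>endv es. mm ^ nt es * Pr es \<le> rowv es g \<and> rowv es g \<le> HH ^ nt es * Pr es)"

definition "InvB es \<longleftrightarrow> (\<exists>L. loop_class V E L \<and> essential V E L \<and> es \<noteq> [] \<and> inL L (last es) \<and>
   (\<forall>g\<in>endv es. mm ^ kk * Qp L es * rowv (piece L es) g \<le> rowv es g \<and>
                  rowv es g \<le> HH ^ kk * Qp L es * rowv (piece L es) g))"


lemma piece_other: "\<not> inL L e \<Longrightarrow> piece L (es @ [e]) = piece L es"
  by (simp add: piece_snoc)

lemma sum_lower:
  fixes x y w :: "'a \<Rightarrow> real"
  assumes "\<forall>g\<in>A. a * y g \<le> x g" "\<forall>g. 0 \<le> w g"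
  shows "a * (\<Sum>g\<in>A. y g * w g) \<le> (\<Sum>g\<in>A. x g * w g)"
proof -
  have "a * (\<Sum>g\<in>A. y g * w g) = (\<Sum>g\<in>A. (a * y g) * w g)"
    by (simp add: sum_distrib_left mult.assoc)
  also have "\<dots> \<le> (\<Sum>g\<in>A. x g * w g)"
    using assms by (intro sum_mono mult_right_mono) auto
  finally show ?thesis .
qed

lemma sum_upper:
  fixes x y w :: "'a \<Rightarrow> real"
  assumes "\<forall>g\<in>A. x g \<le> a * y g" "\<forall>g. 0 \<le> w g"
  shows "(\<Sum>g\<in>A. x g * w g) \<le> a * (\<Sum>g\<in>A. y g * w g)"
proof -
  have "(\<Sum>g\<in>A. x g * w g) \<le> (\<Sum>g\<in>A. (a * y g) * w g)"
    using assms by (intro sum_mono mult_right_mono) auto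
  also have "\<dots> = a * (\<Sum>g\<in>A. y g * w g)"
    by (simp add: sum_distrib_left mult.assoc)
  finally show ?thesis .
qed

lemma inv_main: "es \<in> Omega E \<Longrightarrow> InvA es \<or> InvB es"
proof (induction es rule: rev_induct)
  case Nil
  have "Pr [] = 1" by (simp add: Pr_def pnorm_def)
  then show ?case by (simp add: InvA_def endv_def rowv_def nt_def)
next
  case (snoc e es)
  note d = Omega_snocD[OF snoc.prems]
  have IH: "InvA es \<or> InvB es" using snoc.IH d(1) by blast
  have eE: "e \<in> E" and setE: "set es \<subseteq> E" and conn: "endv es = esrc e" using d by auto
  have setE': "set (es @ [e]) \<subseteq> E" using eE setE by auto
  have pth: "is_path E es" using d(1) by (simp add: Omega_def)
  have ntk: "nt es \<le> kk" using tr_count[OF pth] by (simp add: nt_def kk_def)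
  have xs: "\<And>h. rowv (es @ [e]) h = (\<Sum>g\<in>esrc e. rowv es g * emat e g h)"
    using x_snoc[OF snoc.prems] by blast
  have endv': "endv (es @ [e]) = etgt e" by (simp add: endv_def)
  have enn': "\<forall>g h. 0 \<le> emat e g h" using enn eE by blast
  have Prn: "0 \<le> Pr es" using Pr_nonneg[OF setE] .
  have xn: "\<And>g. 0 \<le> rowv es g" using rowv_nonneg[OF setE] .
  have srcV: "esrc e \<in> V" and tgtV: "etgt e \<in> V" using eV eE by auto
  have fin_src: "finite (esrc e)" using vfin srcV by auto
  have stay: "inL L e" if "InvB es" "loop_class V E L" "essential V E L" "es \<noteq> []" "inL L (last es)" for L
  proof -
    have "esrc e \<in> L" using that conn by (simp add: endv_def inL_def)
    moreover have "(esrc e, etgt e) \<in> RR\<^sup>*" using edge_RR[OF eE] by blast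
    ultimately have "etgt e \<in> L" using that(3) by (auto simp: essential_def)
    then show ?thesis using \<open>esrc e \<in> L\<close> by (simp add: inL_def)
  qed
  show ?case
  proof (cases "istr e")
    case True
    have pieces: "\<And>L. L \<in> LC \<Longrightarrow> piece L (es @ [e]) = piece L es"
      using True by (intro piece_other) (auto simp: istr_def LC_def)
    have Pr': "Pr (es @ [e]) = Pr es" unfolding Pr_def using pieces by (intro prod.cong) auto
    have nt': "nt (es @ [e]) = Suc (nt es)" using True by (simp add: nt_def)
    have notB: "\<not> InvB es"
    proof
      assume B: "InvB es"
      then obtain L where "loop_class V E L" "essential V E L" "es \<noteq> []" "inL L (last es)"
        by (auto simp: InvB_def)
      then have "inL L e" using stay B by blast
      then show False using True \<open>loop_class V E L\<close> by (auto simp: istr_def)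
    qed
    then have A: "InvA es" using IH by blast
    have "InvA (es @ [e])" unfolding InvA_def
    proof (intro conjI ballI)
      fix e' assume "e' \<in> set (es @ [e])"
      then show "\<not> isess e'" using A True by (auto simp: InvA_def isess_def istr_def)
    next
      fix h assume h: "h \<in> endv (es @ [e])"
      then have hT: "h \<in> etgt e" using endv' by simp
      have bnd: "\<forall>g\<in>esrc e. mm ^ nt es * Pr es * 1 \<le> rowv es g \<and> rowv es g \<le> HH ^ nt es * Pr es * 1"
        using A conn by (auto simp: InvA_def)
      have "mm ^ nt es * Pr es * (\<Sum>g\<in>esrc e. 1 * emat e g h) \<le> rowv (es @ [e]) h"
        unfolding xs using bnd enn' by (intro sum_lower) auto
      moreover have "mm * (mm ^ nt es * Pr es) \<le> colsum e h * (mm ^ nt es * Pr es)"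
        using mm_le[OF eE hT] mm_pos Prn by (intro mult_right_mono) auto
      ultimately show "mm ^ nt (es @ [e]) * Pr (es @ [e]) \<le> rowv (es @ [e]) h"
        unfolding Pr' nt' colsum_def by (simp add: mult_ac)
      have "rowv (es @ [e]) h \<le> HH ^ nt es * Pr es * (\<Sum>g\<in>esrc e. 1 * emat e g h)"
        unfolding xs using bnd enn' by (intro sum_upper) auto
      also have "(\<Sum>g\<in>esrc e. 1 * emat e g h) \<le> (\<Sum>g\<in>esrc e. BB)"
        using BB_ge[OF eE] by (intro sum_mono) auto
      then have "HH ^ nt es * Pr es * (\<Sum>g\<in>esrc e. 1 * emat e g h) \<le> HH ^ nt es * Pr es * (\<Sum>g\<in>esrc e. BB)"
        using HH_ge1 Prn by (intro mult_left_mono) auto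
      also have "(\<Sum>g\<in>esrc e. BB) = card (esrc e) * BB" by simp
      also have "HH ^ nt es * Pr es * (card (esrc e) * BB) \<le> HH ^ nt es * Pr es * (NN * BB)"
        using NN_ge[OF srcV] BB_ge1 HH_ge1 Prn by (intro mult_left_mono mult_right_mono) auto
      also have "HH ^ nt es * Pr es * (NN * BB) = HH ^ nt (es @ [e]) * Pr (es @ [e])"
        unfolding Pr' nt' HH_def by (simp add: mult_ac)
      finally show "rowv (es @ [e]) h \<le> HH ^ nt (es @ [e]) * Pr (es @ [e])" .
    qed
    then show ?thesis by blast
  next
    case False
    then obtain L where L: "loop_class V E L" and eL: "inL L e" by (auto simp: istr_def)
    have LLC: "L \<in> LC" using L by (simp add: LC_def)
    have others: "\<And>L'. L' \<in> LC - {L} \<Longrightarrow> piece L' (es @ [e]) = piece L' es"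
    proof -
      fix L' assume L': "L' \<in> LC - {L}"
      have "\<not> inL L' e"
      proof
        assume "inL L' e"
        then have "L' = L" using class_disj[of L' L "esrc e"] L L' eL by (auto simp: LC_def inL_def)
        then show False using L' by simp
      qed
      then show "piece L' (es @ [e]) = piece L' es" by (rule piece_other)
    qed
    have Qp': "Qp L (es @ [e]) = Qp L es" unfolding Qp_def using others by (intro prod.cong) auto
    have pL: "piece L (es @ [e]) = piece L es @ [e]" using eL by (simp add: piece_snoc)
    have Qn: "0 \<le> Qp L es" using Qp_nonneg[OF setE] .
    have pLE: "set (piece L es @ [e]) \<subseteq> E" using piece_sub setE eE by auto
    show ?thesis
    proof (cases "essential V E L")
      case ess: True
      have "InvB (es @ [e])"
      proof (cases "InvA es")
        case A: True
        have noL: "piece L es = []"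
        proof (rule ccontr)
          assume "piece L es \<noteq> []"
          then obtain e' where "e' \<in> set es" "inL L e'" by (auto simp: piece_def inL_def filter_empty_conv)
          then show False using A L ess by (auto simp: InvA_def isess_def)
        qed
        have PrQ: "Pr es = Qp L es" using Pr_split[OF LLC, of es] noL by (simp add: pnorm_def)
        have r1: "\<And>h. rowv [e] h = (\<Sum>g\<in>esrc e. 1 * emat e g h)"
          using wfE[of "[e]"] eE by (simp add: rowv_single)
        have bnd: "\<forall>g\<in>esrc e. mm ^ kk * Qp L es * 1 \<le> rowv es g \<and> rowv es g \<le> HH ^ kk * Qp L es * 1"
        proof
          fix g assume g: "g \<in> esrc e"
          have b: "mm ^ nt es * Pr es \<le> rowv es g" "rowv es g \<le> HH ^ nt es * Pr es"
            using A g conn by (auto simp: InvA_def)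
          have "mm ^ kk \<le> mm ^ nt es" using mm_pos mm_le1 ntk by (intro power_decreasing) auto
          then have "mm ^ kk * Pr es \<le> mm ^ nt es * Pr es" using Prn by (intro mult_right_mono)
          moreover have "HH ^ nt es \<le> HH ^ kk" using HH_ge1 ntk by (intro power_increasing) auto
          then have "HH ^ nt es * Pr es \<le> HH ^ kk * Pr es" using Prn by (intro mult_right_mono)
          ultimately show "mm ^ kk * Qp L es * 1 \<le> rowv es g \<and> rowv es g \<le> HH ^ kk * Qp L es * 1"
            using b PrQ by simp
        qed
        show ?thesis unfolding InvB_def
        proof (intro exI[of _ L] conjI ballI)
          fix h assume "h \<in> endv (es @ [e])"
          show "mm ^ kk * Qp L (es @ [e]) * rowv (piece L (es @ [e])) h \<le> rowv (es @ [e]) h"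
            unfolding Qp' pL noL append_Nil r1 xs using bnd enn' by (intro sum_lower) auto
          show "rowv (es @ [e]) h \<le> HH ^ kk * Qp L (es @ [e]) * rowv (piece L (es @ [e])) h"
            unfolding Qp' pL noL append_Nil r1 xs using bnd enn' by (intro sum_upper) auto
        qed (use L ess eL in auto)
      next
        case notA: False
        then have B: "InvB es" using IH by blast
        then obtain L0 where L0: "loop_class V E L0" "essential V E L0" "es \<noteq> []" "inL L0 (last es)"
          and bnd0: "\<forall>g\<in>endv es. mm ^ kk * Qp L0 es * rowv (piece L0 es) g \<le> rowv es g \<and>
                  rowv es g \<le> HH ^ kk * Qp L0 es * rowv (piece L0 es) g"
          by (auto simp: InvB_def)
        have "esrc e \<in> L0" using L0 conn by (simp add: endv_def inL_def)
        then have "L0 = L" using class_disj[OF L0(1) L] eL by (simp add: inL_def)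
        then have L0s: "inL L (last es)" and bnd: "\<forall>g\<in>esrc e. mm ^ kk * Qp L es * rowv (piece L es) g \<le> rowv es g \<and>
                  rowv es g \<le> HH ^ kk * Qp L es * rowv (piece L es) g"
          using L0 bnd0 conn by auto
        have lastp: "last (piece L es) = last es" unfolding piece_def
          using L0s L0(3) by (intro last_filter) (auto simp: inL_def)
        have pne: "piece L es \<noteq> []" using L0s L0(3) by (auto simp: piece_def inL_def filter_empty_conv)
        have rs: "\<And>h. rowv (piece L es @ [e]) h = (\<Sum>g\<in>esrc e. rowv (piece L es) g * emat e g h)"
        proof -
          fix h
          have "rowv (piece L es @ [e]) h = (\<Sum>g\<in>etgt (last (piece L es)). rowv (piece L es) g * emat e g h)"
            using pne wfE[OF pLE] by (intro rowv_snoc) auto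
          then show "rowv (piece L es @ [e]) h = (\<Sum>g\<in>esrc e. rowv (piece L es) g * emat e g h)"
            using lastp conn L0(3) by (simp add: endv_def)
        qed
        show ?thesis unfolding InvB_def
        proof (intro exI[of _ L] conjI ballI)
          fix h assume "h \<in> endv (es @ [e])"
          show "mm ^ kk * Qp L (es @ [e]) * rowv (piece L (es @ [e])) h \<le> rowv (es @ [e]) h"
            unfolding Qp' pL rs xs using bnd enn' by (intro sum_lower) auto
          show "rowv (es @ [e]) h \<le> HH ^ kk * Qp L (es @ [e]) * rowv (piece L (es @ [e])) h"
            unfolding Qp' pL rs xs using bnd enn' by (intro sum_upper) auto
        qed (use L ess eL in auto)
      qed
      then show ?thesis by blast
    next
      case ness: False
      have c1: "\<forall>v\<in>L. card v = 1" using single L ness by blast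
      have "card (esrc e) = 1" "card (etgt e) = 1" using c1 eL by (auto simp: inL_def)
      then obtain u0 w0 where u0: "esrc e = {u0}" and w0: "etgt e = {w0}" by (meson card_1_singletonE)
      have notB: "\<not> InvB es"
      proof
        assume B: "InvB es"
        then obtain L0 where L0: "loop_class V E L0" "essential V E L0" "es \<noteq> []" "inL L0 (last es)"
          by (auto simp: InvB_def)
        then have "inL L0 e" using stay B by blast
        then have "L0 = L" using class_disj[OF L0(1) L, of "esrc e"] eL by (simp add: inL_def)
        then show False using ness L0 by simp
      qed
      then have A: "InvA es" using IH by blast
      define s where "s = emat e u0 w0"
      have sn: "0 \<le> s" using enn' by (simp add: s_def)
      have nt': "nt (es @ [e]) = nt es" using False by (simp add: nt_def)
      have pn: "pnorm (piece L es @ [e]) = pnorm (piece L es) * s"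
      proof (cases "piece L es = []")
        case True
        have "pnorm [e] = rowv [e] w0" using w0 by (simp add: pnorm_rowv)
        also have "\<dots> = s" using wfE[of "[e]"] eE u0 by (simp add: rowv_single s_def)
        finally show ?thesis using True by (simp add: pnorm_def)
      next
        case pne: False
        then obtain e' where e': "e' \<in> set es" "inL L e'" by (auto simp: piece_def inL_def filter_empty_conv)
        have esne: "es \<noteq> []" using e' by auto
        have tl: "etgt (last es) \<in> L" using conn eL esne by (simp add: endv_def inL_def)
        have "(esrc e', esrc (last es)) \<in> RR\<^sup>*" using reach_src[OF pth e'(1)] .
        moreover have "last es \<in> E" using setE esne by auto
        then have "(esrc (last es), etgt (last es)) \<in> RR\<^sup>*" using edge_RR by blast
        ultimately have "esrc (last es) \<in> L" using class_closed[OF L _ tl] e'(2) by (auto simp: inL_def)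
        then have inl: "inL L (last es)" using tl by (simp add: inL_def)
        have lastp: "last (piece L es) = last es" unfolding piece_def
          using inl esne by (intro last_filter) (auto simp: inL_def)
        have lt: "etgt (last (piece L es)) = {u0}" using lastp conn esne u0 by (simp add: endv_def)
        have "pnorm (piece L es @ [e]) = rowv (piece L es @ [e]) w0" using w0 by (simp add: pnorm_rowv)
        also have "\<dots> = rowv (piece L es) u0 * s"
          using rowv_snoc[OF pne wfE[OF pLE], of w0] lt by (simp add: s_def)
        also have "rowv (piece L es) u0 = pnorm (piece L es)" using pnorm_rowv[OF pne] lt by simp
        finally show ?thesis .
      qed
      have Pr': "Pr (es @ [e]) = Pr es * s"
        using Pr_split[OF LLC, of "es @ [e]"] Pr_split[OF LLC, of es] Qp' pL pn by simp
      have xw: "rowv (es @ [e]) w0 = rowv es u0 * s" using xs[of w0] u0 by (simp add: s_def)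
      have bu: "mm ^ nt es * Pr es \<le> rowv es u0" "rowv es u0 \<le> HH ^ nt es * Pr es"
        using A conn u0 by (auto simp: InvA_def)
      have "InvA (es @ [e])" unfolding InvA_def
      proof (intro conjI ballI)
        fix e' assume e': "e' \<in> set (es @ [e])"
        show "\<not> isess e'"
        proof
          assume "isess e'"
          then obtain L1 where L1: "loop_class V E L1" "essential V E L1" "inL L1 e'" by (auto simp: isess_def)
          show False
          proof (cases "e' = e")
            case True
            then have "L1 = L" using class_disj[OF L1(1) L, of "esrc e"] L1(3) eL by (simp add: inL_def)
            then show False using L1 ness by simp
          next
            case False
            then show False using A e' L1 by (auto simp: InvA_def isess_def)
          qed
        qed
      next
        fix h assume "h \<in> endv (es @ [e])"
        then have hw: "h = w0" using endv' w0 by simp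
        show "mm ^ nt (es @ [e]) * Pr (es @ [e]) \<le> rowv (es @ [e]) h"
          unfolding hw xw Pr' nt' using bu sn by (simp add: mult_right_mono mult.assoc[symmetric])
        show "rowv (es @ [e]) h \<le> HH ^ nt (es @ [e]) * Pr (es @ [e])"
          unfolding hw xw Pr' nt' using bu sn by (simp add: mult_right_mono mult.assoc[symmetric])
      qed
      then show ?thesis by blast
    qed
  qed
qed


lemma bounds:
  assumes om: "es \<in> Omega E"
  shows "mm ^ kk * Pr es \<le> pnorm es \<and> pnorm es \<le> NN * HH ^ kk * Pr es"
proof (cases "es = []")
  case True
  have "Pr [] = 1" by (simp add: Pr_def pnorm_def)
  moreover have "mm ^ kk \<le> 1" using mm_pos mm_le1 by (simp add: power_le_one)
  moreover have "1 \<le> NN * HH ^ kk" using NN_ge1 HH_ge1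
    using mult_mono[of 1 NN 1 "HH ^ kk"] one_le_power[of HH kk] by simp
  ultimately show ?thesis using True by (simp add: pnorm_def)
next
  case ne: False
  have pth: "is_path E es" and setE: "set es \<subseteq> E" using om by (auto simp: Omega_def is_path_def)
  have lastE: "last es \<in> E" using setE ne by auto
  have endV: "endv es \<in> V" using eV lastE ne by (simp add: endv_def)
  have pn: "pnorm es = (\<Sum>g\<in>endv es. rowv es g)" using pnorm_rowv[OF ne] ne by (simp add: endv_def)
  have Prn: "0 \<le> Pr es" using Pr_nonneg[OF setE] .
  have xn: "\<And>g. 0 \<le> rowv es g" using rowv_nonneg[OF setE] .
  have finend: "finite (endv es)" "endv es \<noteq> {}" using vfin endV by auto
  have ntk: "nt es \<le> kk" using tr_count[OF pth] by (simp add: nt_def kk_def)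
  have mmk: "mm ^ kk \<le> mm ^ nt es" using mm_pos mm_le1 ntk by (intro power_decreasing) auto
  have HHk: "HH ^ nt es \<le> HH ^ kk" using HH_ge1 ntk by (intro power_increasing) auto
  have HHn: "0 \<le> HH ^ kk" using HH_ge1 by simp
  from inv_main[OF om] show ?thesis
  proof
    assume A: "InvA es"
    obtain g0 where g0: "g0 \<in> endv es" using finend by blast
    have "mm ^ kk * Pr es \<le> mm ^ nt es * Pr es" using mmk Prn by (rule mult_right_mono)
    also have "\<dots> \<le> rowv es g0" using A g0 by (auto simp: InvA_def)
    also have "\<dots> \<le> pnorm es" unfolding pn using finend g0 xn by (intro member_le_sum) auto
    finally have lo: "mm ^ kk * Pr es \<le> pnorm es" .
    have "pnorm es \<le> (\<Sum>g\<in>endv es. HH ^ nt es * Pr es)"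
      unfolding pn using A by (intro sum_mono) (auto simp: InvA_def)
    also have "\<dots> = card (endv es) * (HH ^ nt es * Pr es)" by simp
    also have "\<dots> \<le> NN * (HH ^ kk * Pr es)"
      using NN_ge[OF endV] HHk Prn NN_ge1 HHn HH_ge1 by (intro mult_mono mult_right_mono) auto
    finally show ?thesis using lo by (simp add: mult.assoc)
  next
    assume B: "InvB es"
    then obtain L where L: "loop_class V E L" "essential V E L" "inL L (last es)"
      and bnd: "\<forall>g\<in>endv es. mm ^ kk * Qp L es * rowv (piece L es) g \<le> rowv es g \<and>
                  rowv es g \<le> HH ^ kk * Qp L es * rowv (piece L es) g"
      by (auto simp: InvB_def)
    have LLC: "L \<in> LC" using L by (simp add: LC_def)
    have lastp: "last (piece L es) = last es" unfolding piece_def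
      using L(3) ne by (intro last_filter) (auto simp: inL_def)
    have pne: "piece L es \<noteq> []" using L(3) ne by (auto simp: piece_def inL_def filter_empty_conv)
    have pl: "pnorm (piece L es) = (\<Sum>g\<in>endv es. rowv (piece L es) g)"
      using pnorm_rowv[OF pne] lastp ne by (simp add: endv_def)
    have PrL: "Pr es = Qp L es * (\<Sum>g\<in>endv es. rowv (piece L es) g)"
      using Pr_split[OF LLC, of es] pl by simp
    have "mm ^ kk * Pr es = (\<Sum>g\<in>endv es. mm ^ kk * Qp L es * rowv (piece L es) g)"
      unfolding PrL by (simp add: sum_distrib_left mult.assoc)
    also have "\<dots> \<le> pnorm es" unfolding pn using bnd by (intro sum_mono) auto
    finally have lo: "mm ^ kk * Pr es \<le> pnorm es" .
    have "pnorm es \<le> (\<Sum>g\<in>endv es. HH ^ kk * Qp L es * rowv (piece L es) g)"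
      unfolding pn using bnd by (intro sum_mono) auto
    also have "\<dots> = HH ^ kk * Pr es" unfolding PrL by (simp add: sum_distrib_left mult.assoc)
    also have "\<dots> \<le> NN * HH ^ kk * Pr es"
      using mult_right_mono[of 1 "real NN" "HH ^ kk * Pr es"] NN_ge1 HHn Prn by (simp add: mult.assoc)
    finally show ?thesis using lo by simp
  qed
qed

lemma decomp: "decomposable V E"
proof -
  define lo where "lo = mm ^ kk"
  define hi where "hi = NN * HH ^ kk"
  have lop: "0 < lo" using mm_pos by (simp add: lo_def)
  have hi1: "1 \<le> hi" unfolding hi_def using NN_ge1 HH_ge1
    using mult_mono[of 1 NN 1 "HH ^ kk"] one_le_power[of HH kk] by simp
  define C where "C = max (1 / lo) hi"
  have C1: "1 \<le> C" using hi1 by (simp add: C_def)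
  have Cpos: "0 < C" using C1 by simp
  have prodeq: "\<And>es. (\<Prod>L\<in>{L. loop_class V E L}. pnorm (piece L es)) = Pr es"
    by (simp add: Pr_def LC_def)
  show ?thesis unfolding decomposable_def
  proof (intro exI[of _ C] conjI ballI C1)
    fix es assume om: "es \<in> Omega E"
    have b: "lo * Pr es \<le> pnorm es" "pnorm es \<le> hi * Pr es"
      using bounds[OF om] by (auto simp: lo_def hi_def)
    have Prn: "0 \<le> Pr es" using om Pr_nonneg by (auto simp: Omega_def is_path_def)
    have "1 / C \<le> lo"
    proof -
      have "1 / lo \<le> C" by (simp add: C_def)
      then show ?thesis using lop Cpos by (simp add: field_simps)
    qed
    then have "Pr es * (1 / C) \<le> Pr es * lo" using Prn by (rule mult_left_mono)
    then have "Pr es / C \<le> lo * Pr es" by (simp add: mult.commute)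
    then show "(\<Prod>L\<in>{L. loop_class V E L}. pnorm (piece L es)) / C \<le> pnorm es"
      using b prodeq by simp
    have "hi * Pr es \<le> C * Pr es" using Prn by (intro mult_right_mono) (auto simp: C_def)
    then show "pnorm es \<le> C * (\<Prod>L\<in>{L. loop_class V E L}. pnorm (piece L es))"
      using b prodeq by simp
  qed
qed

end




lemma amap_comp: "amap a b \<circ> amap c e = amap (a * c) (a * e + b)"
  by (auto simp: amap_def algebra_simps)

lemma affine_bijI: "a \<noteq> 0 \<Longrightarrow> amap a b \<in> affine_bij"
  by (auto simp: affine_bij_def)

lemma affine_bijE: "h \<in> affine_bij \<Longrightarrow> (\<And>a b. a \<noteq> 0 \<Longrightarrow> h = amap a b \<Longrightarrow> P) \<Longrightarrow> P"
  by (auto simp: affine_bij_def)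

lemma affine_bij_comp: "h1 \<in> affine_bij \<Longrightarrow> h2 \<in> affine_bij \<Longrightarrow> h1 \<circ> h2 \<in> affine_bij"
proof -
  assume "h1 \<in> affine_bij" "h2 \<in> affine_bij"
  then obtain a b a' b' where "a \<noteq> 0" "h1 = amap a b" "a' \<noteq> 0" "h2 = amap a' b'"
    by (auto simp: affine_bij_def)
  then show ?thesis using affine_bijI[of "a * a'" "a * b' + b"] by (simp add: amap_comp)
qed

lemma id_amap: "id = amap 1 0"
  by (auto simp: amap_def)

lemma id_affine: "id \<in> affine_bij"
  by (simp add: id_amap affine_bijI)

lemma amap_cont: "continuous_on UNIV (amap a b)"
  unfolding amap_def by (intro continuous_intros)

lemma affine_open_vimage: "h \<in> affine_bij \<Longrightarrow> open S \<Longrightarrow> open (h -` S)"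
  by (auto elim!: affine_bijE intro!: open_vimage amap_cont)

lemma Tint_affine: "fst J < snd J \<Longrightarrow> Tint J \<in> affine_bij"
  by (simp add: Tint_def affine_bijI)

lemma Tinv_affine: "fst J < snd J \<Longrightarrow> Tinv J \<in> affine_bij"
  by (simp add: Tinv_def affine_bijI)

lemma Tinv_eq: "Tinv (a, b) x = (x - a) / (b - a)"
  by (simp add: Tinv_def amap_def diff_divide_distrib)

lemma Tint_eq: "Tint (a, b) x = (b - a) * x + a"
  by (simp add: Tint_def amap_def)

lemma Tint_Tinv_pt: "a < b \<Longrightarrow> Tint (a, b) (Tinv (a, b) x) = x"
  by (simp add: Tinv_eq Tint_eq)

lemma Tint_Tinv: "fst J < snd J \<Longrightarrow> Tint J \<circ> (Tinv J \<circ> g) = g"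
  using Tint_Tinv_pt[of "fst J" "snd J"] by (auto simp: fun_eq_iff)

lemma Tinv_in01: "y < y' \<Longrightarrow> z \<in> {y<..<y'} \<Longrightarrow> Tinv (y, y') z \<in> {0<..<1}"
  by (auto simp: Tinv_eq divide_less_eq)

lemma Sw_Nil[simp]: "Sw r d [] = id" by (simp add: Sw_def)
lemma Sw_Cons[simp]: "Sw r d (i # w) = Smap r d i \<circ> Sw r d w" by (simp add: Sw_def)

lemma Sw_append: "Sw r d (u @ z) = Sw r d u \<circ> Sw r d z"
  by (induction u) auto

lemma Sw_diff: "Sw r d w z - Sw r d w k = prod_list (map r w) * (z - k)"
proof (induction w)
  case Nil then show ?case by simp
next
  case (Cons a w)
  have "Sw r d (a # w) z - Sw r d (a # w) k = r a * (Sw r d w z - Sw r d w k)"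
    by (simp add: Smap_def amap_def algebra_simps)
  then show ?case using Cons by simp
qed

lemma pw_Cons[simp]: "pw p (i # w) = p i * pw p w" by (simp add: pw_def)
lemma pw_Nil[simp]: "pw p [] = 1" by (simp add: pw_def)

locale conc =
  fixes I :: "'i set" and r d p :: "'i \<Rightarrow> real" and K :: "real set"
    and \<mu> :: "real measure" and \<Phi> :: "amap set \<Rightarrow> amap \<Rightarrow> 'i list set"
  assumes finI: "finite I" and Ine: "I \<noteq> {}"
    and rI: "\<forall>i\<in>I. 0 < \<bar>r i\<bar> \<and> \<bar>r i\<bar> < 1"
    and pI: "\<forall>i\<in>I. 0 < p i"
    and Kne: "K \<noteq> {}" and Kself: "K = (\<Union>i\<in>I. Smap r d i ` K)"
    and Knot1: "\<not> (\<exists>x. K = {x})" and Khull: "convex hull K = {0..1}"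
    and prob: "prob_space \<mu>" and sets_mu: "sets \<mu> = sets borel"
    and selfsim: "\<forall>E \<in> sets borel. measure \<mu> E = (\<Sum>i\<in>I. p i * measure \<mu> (Smap r d i -` E))"
    and itr: "iteration_rule I r d K \<Phi>"
begin

lemma K01: "K \<subseteq> {0..1}"
  using hull_subset[of K convex] Khull by simp

lemma Smap_affine: "i \<in> I \<Longrightarrow> Smap r d i \<in> affine_bij"
  using rI by (auto simp: Smap_def intro!: affine_bijI)

lemma Sw_affine: "w \<in> lists I \<Longrightarrow> Sw r d w \<in> affine_bij"
  by (induction w) (auto simp: id_affine Smap_affine affine_bij_comp)

lemma Smap_K: "i \<in> I \<Longrightarrow> k \<in> K \<Longrightarrow> Smap r d i k \<in> K"
  using Kself by blast

lemma Sw_K: "w \<in> lists I \<Longrightarrow> k \<in> K \<Longrightarrow> Sw r d w k \<in> K"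
  by (induction w arbitrary: k) (auto simp: Smap_K)

lemma K_words: "x \<in> K \<Longrightarrow> \<exists>w\<in>lists I. length w = n \<and> (\<exists>k\<in>K. x = Sw r d w k)"
proof (induction n)
  case 0 then show ?case by (intro bexI[of _ "[]"]) auto
next
  case (Suc n)
  then obtain w k where w: "w \<in> lists I" "length w = n" "k \<in> K" "x = Sw r d w k" by blast
  from w(3) obtain i k' where i: "i \<in> I" "k' \<in> K" "k = Smap r d i k'" using Kself by blast
  have "x = Sw r d (w @ [i]) k'" using w i by (simp add: Sw_append)
  then show ?case using w i by (intro bexI[of _ "w @ [i]"]) auto
qed

lemma pw_pos: "w \<in> lists I \<Longrightarrow> 0 < pw p w"
  by (induction w) (auto simp: pI)

lemma pw_nn: "w \<in> lists I \<Longrightarrow> 0 \<le> pw p w"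
  using pw_pos by (simp add: less_imp_le)

lemma space_mu: "space \<mu> = UNIV"
  using sets_eq_imp_space_eq[OF sets_mu] by simp

lemma Smap_borel: "E \<in> sets borel \<Longrightarrow> Smap r d i -` E \<in> sets borel"
proof -
  assume E: "E \<in> sets borel"
  have "Smap r d i \<in> borel_measurable borel"
    by (simp add: Smap_def borel_measurable_continuous_onI amap_cont)
  then show ?thesis using measurable_sets_borel E by blast
qed

lemma mu_step: "E \<in> sets borel \<Longrightarrow> i \<in> I \<Longrightarrow> p i * measure \<mu> (Smap r d i -` E) \<le> measure \<mu> E"
proof -
  assume E: "E \<in> sets borel" and i: "i \<in> I"
  have "p i * measure \<mu> (Smap r d i -` E) \<le> (\<Sum>j\<in>I. p j * measure \<mu> (Smap r d j -` E))"
    using finI i pI by (intro member_le_sum) auto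
  then show ?thesis using selfsim E by simp
qed

lemma mu_word: "w \<in> lists I \<Longrightarrow> E \<in> sets borel \<Longrightarrow> pw p w * measure \<mu> (Sw r d w -` E) \<le> measure \<mu> E"
proof (induction w arbitrary: E)
  case Nil then show ?case by simp
next
  case (Cons i w)
  have i: "i \<in> I" and w: "w \<in> lists I" using Cons.prems by auto
  have E': "Smap r d i -` E \<in> sets borel" using Smap_borel Cons.prems by blast
  have "pw p w * measure \<mu> (Sw r d w -` (Smap r d i -` E)) \<le> measure \<mu> (Smap r d i -` E)"
    using Cons.IH[OF w E'] .
  then have "p i * (pw p w * measure \<mu> (Sw r d w -` (Smap r d i -` E))) \<le> p i * measure \<mu> (Smap r d i -` E)"
    using pI i by (intro mult_left_mono) auto
  also have "\<dots> \<le> measure \<mu> E" using mu_step Cons.prems(2) i by blast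
  moreover have "Sw r d w -` (Smap r d i -` E) = Sw r d (i # w) -` E" by auto
  ultimately show ?case by (simp add: mult.assoc comp_def)
qed

lemma exR: "\<exists>R::nat. 0 < measure \<mu> {- real R..real R}"
proof (rule ccontr)
  assume "\<not> ?thesis"
  then have z: "\<And>R::nat. measure \<mu> {- real R..real R} = 0"
    using measure_nonneg[of \<mu>] by (metis not_less antisym)
  interpret prob_space \<mu> by (rule prob)
  have "\<And>R::nat. {- real R..real R} \<in> null_sets \<mu>"
    using z sets_mu by (auto simp: null_sets_def emeasure_eq_measure)
  then have "(\<Union>R::nat. {- real R..real R}) \<in> null_sets \<mu>" by blast
  moreover have "(\<Union>R::nat. {- real R..real R}) = UNIV"
  proof -
    have "x \<in> {- real (nat \<lceil>\<bar>x\<bar>\<rceil>)..real (nat \<lceil>\<bar>x\<bar>\<rceil>)}" for x :: real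
    proof -
      have "\<bar>x\<bar> \<le> real (nat \<lceil>\<bar>x\<bar>\<rceil>)" by (rule real_nat_ceiling_ge)
      then have "- real (nat \<lceil>\<bar>x\<bar>\<rceil>) \<le> x" "x \<le> real (nat \<lceil>\<bar>x\<bar>\<rceil>)"
        using abs_ge_self[of x] abs_ge_minus_self[of x] by linarith+
      then show ?thesis by (simp only: atLeastAtMost_iff)
    qed
    then show ?thesis by blast
  qed
  ultimately have "emeasure \<mu> (space \<mu>) = 0" using space_mu by (simp add: null_sets_def)
  then show False using emeasure_space_1 by simp
qed

definition "rho = Max (abs ` r ` I)"

lemma rho: "0 < rho" "rho < 1" "i \<in> I \<Longrightarrow> \<bar>r i\<bar> \<le> rho"
proof -
  have fin: "finite (abs ` r ` I)" "abs ` r ` I \<noteq> {}" using finI Ine by auto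
  obtain i0 where i0: "i0 \<in> I" using Ine by blast
  then have "\<bar>r i0\<bar> \<le> rho" unfolding rho_def using fin by (intro Max_ge) auto
  then show "0 < rho" using rI i0 by force
  show "rho < 1" unfolding rho_def using fin rI by (subst Max_less_iff) auto
  show "i \<in> I \<Longrightarrow> \<bar>r i\<bar> \<le> rho" unfolding rho_def using fin by (intro Max_ge) auto
qed

lemma prod_r: "w \<in> lists I \<Longrightarrow> \<bar>prod_list (map r w)\<bar> \<le> rho ^ length w"
proof (induction w)
  case Nil then show ?case by simp
next
  case (Cons i w)
  then have "\<bar>r i\<bar> * \<bar>prod_list (map r w)\<bar> \<le> rho * rho ^ length w"
    using rho by (intro mult_mono) auto
  then show ?case by (simp add: abs_mult)
qed

lemma pos_open:
  assumes U: "open U" and x: "x \<in> K" "x \<in> U"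
  shows "0 < measure \<mu> U"
proof -
  interpret prob_space \<mu> by (rule prob)
  obtain \<delta> where \<delta>: "0 < \<delta>" "ball x \<delta> \<subseteq> U" using U x open_contains_ball by blast
  obtain R :: nat where R: "0 < measure \<mu> {- real R..real R}" using exR by blast
  have "0 < \<delta> / (real R + 1)" using \<delta> by simp
  then obtain n where n: "rho ^ n < \<delta> / (real R + 1)" using real_arch_pow_inv rho(2) by blast
  obtain w k where w: "w \<in> lists I" "length w = n" "k \<in> K" "x = Sw r d w k" using K_words[OF x(1)] by blast
  have k01: "0 \<le> k" "k \<le> 1" using K01 w(3) by auto
  have sub: "{- real R..real R} \<subseteq> Sw r d w -` U"
  proof
    fix z assume z: "z \<in> {- real R..real R}"
    have "\<bar>Sw r d w z - x\<bar> = \<bar>prod_list (map r w)\<bar> * \<bar>z - k\<bar>" using w(4) by (simp add: Sw_diff abs_mult)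
    also have "\<dots> \<le> rho ^ n * (real R + 1)"
      using prod_r[OF w(1)] w(2) z k01 by (intro mult_mono) auto
    also have "\<dots> < \<delta>" using n by (simp add: field_simps)
    finally have "Sw r d w z \<in> ball x \<delta>" by (simp add: dist_real_def abs_minus_commute)
    then show "z \<in> Sw r d w -` U" using \<delta> by auto
  qed
  have Ub: "U \<in> sets borel" using U by simp
  have Sb: "Sw r d w -` U \<in> sets \<mu>"
  proof -
    have "open (Sw r d w -` U)" using affine_open_vimage[OF Sw_affine[OF w(1)] U] .
    then show ?thesis using sets_mu by simp
  qed
  have "0 < pw p w * measure \<mu> {- real R..real R}" using pw_pos[OF w(1)] R by simp
  also have "\<dots> \<le> pw p w * measure \<mu> (Sw r d w -` U)"
    using finite_measure_mono[OF sub Sb] pw_pos[OF w(1)] by (intro mult_left_mono) auto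
  also have "\<dots> \<le> measure \<mu> U" using mu_word[OF w(1) Ub] .
  finally show ?thesis .
qed

lemma K_mid: "\<exists>x\<in>K. x \<in> {0<..<1}"
proof (rule ccontr)
  assume "\<not> ?thesis"
  then have "K \<subseteq> {0, 1}" using K01 by fastforce
  have "0 \<in> K"
  proof (rule ccontr)
    assume "0 \<notin> K" then have "K = {1}" using \<open>K \<subseteq> {0, 1}\<close> Kne by auto
    then show False using Knot1 by blast
  qed
  moreover have "1 \<in> K"
  proof (rule ccontr)
    assume "1 \<notin> K" then have "K = {0}" using \<open>K \<subseteq> {0, 1}\<close> Kne by auto
    then show False using Knot1 by blast
  qed
  ultimately have K: "K = {0, 1}" using \<open>K \<subseteq> {0, 1}\<close> by auto
  obtain i where i: "i \<in> I" using Ine by blast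
  have "Smap r d i 0 \<in> K" "Smap r d i 1 \<in> K" using Smap_K[OF i] K by auto
  then have "d i \<in> {0, 1}" "r i + d i \<in> {0, 1}" using K by (auto simp: Smap_def amap_def)
  then have "\<bar>r i\<bar> = 0 \<or> \<bar>r i\<bar> = 1" by auto
  then show False using rI i by auto
qed


lemma Phi_props:
  assumes "finite v" "v \<subseteq> affine_bij" "f \<in> v"
  shows "finite (\<Phi> v f)" "\<Phi> v f \<subseteq> lists I"
    "\<exists>N. \<forall>n\<ge>N. \<forall>w \<in> lists I. length w = n \<longrightarrow> (\<exists>!u. u \<in> \<Phi> v f \<and> prefix u w)"
proof -
  have H: "finite (\<Phi> v f) \<and> \<Phi> v f \<subseteq> lists I \<and>
    (\<exists>N. \<forall>n\<ge>N. \<forall>w \<in> lists I. length w = n \<longrightarrow> (\<exists>!u. u \<in> \<Phi> v f \<and> prefix u w))"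
    by (rule conjunct1[OF itr[unfolded iteration_rule_def], rule_format]) (use assms in auto)
  then show "finite (\<Phi> v f)" "\<Phi> v f \<subseteq> lists I"
    "\<exists>N. \<forall>n\<ge>N. \<forall>w \<in> lists I. length w = n \<longrightarrow> (\<exists>!u. u \<in> \<Phi> v f \<and> prefix u w)"
    by (rule conjunct1, rule conjunct1[OF conjunct2], rule conjunct2[OF conjunct2])
qed

lemma cut_decomp:
  assumes v: "finite v" "v \<subseteq> affine_bij" "f \<in> v" and k: "k \<in> K"
  shows "\<exists>\<tau>\<in>\<Phi> v f. \<exists>k'\<in>K. k = Sw r d \<tau> k'"
proof -
  obtain N where N: "\<forall>n\<ge>N. \<forall>w \<in> lists I. length w = n \<longrightarrow> (\<exists>!u. u \<in> \<Phi> v f \<and> prefix u w)"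
    using Phi_props(3)[OF v] by blast
  obtain w k0 where w: "w \<in> lists I" "length w = N" "k0 \<in> K" "k = Sw r d w k0"
    using K_words[OF k] by blast
  obtain u where u: "u \<in> \<Phi> v f" "prefix u w" using N w by blast
  then obtain z where z: "w = u @ z" by (auto simp: prefix_def)
  have zI: "z \<in> lists I" using w(1) z by auto
  have "k = Sw r d u (Sw r d z k0)" using w(4) z by (simp add: Sw_append)
  moreover have "Sw r d z k0 \<in> K" using Sw_K[OF zI w(3)] .
  ultimately show ?thesis using u(1) by blast
qed

lemma Ymaps_iff: "g \<in> Ymaps r d \<Phi> \<Delta> v \<longleftrightarrow> (\<exists>f \<tau>. g = Tint \<Delta> \<circ> f \<circ> Sw r d \<tau> \<and> f \<in> v \<and> \<tau> \<in> \<Phi> v f)"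
  unfolding Ymaps_def by blast

lemma Ymaps_fin: "finite v \<Longrightarrow> v \<subseteq> affine_bij \<Longrightarrow> finite (Ymaps r d \<Phi> \<Delta> v)"
proof -
  assume v: "finite v" "v \<subseteq> affine_bij"
  have "Ymaps r d \<Phi> \<Delta> v = (\<lambda>(f, \<tau>). Tint \<Delta> \<circ> f \<circ> Sw r d \<tau>) ` (SIGMA f:v. \<Phi> v f)"
    unfolding Ymaps_def by auto
  moreover have "finite (SIGMA f:v. \<Phi> v f)" using v Phi_props(1) by (intro finite_SigmaI) auto
  ultimately show ?thesis by simp
qed

definition Gd :: "npair \<Rightarrow> bool" where
  "Gd c \<longleftrightarrow> fst (fst c) < snd (fst c) \<and> finite (snd c) \<and> snd c \<noteq> {} \<and> snd c \<subseteq> affine_bij \<and>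
     (\<forall>h\<in>snd c. 0 < measure \<mu> (h -` {0<..<1})) \<and>
     (\<forall>x\<in>K. x \<in> {fst (fst c)<..<snd (fst c)} \<longrightarrow> (\<exists>h\<in>snd c. \<exists>k\<in>K. x = Tint (fst c) (h k)))"

lemma rchildrenE:
  assumes "c' \<in> rchildren r d \<Phi> K c"
  obtains y y' where
    "c' = ((y, y'), {Tinv (y, y') \<circ> g | g. g \<in> Ymaps r d \<Phi> (fst c) (snd c) \<and> g ` K \<inter> {y<..<y'} \<noteq> {}})"
    "y \<in> cutpts r d \<Phi> (fst c) (snd c)" "y' \<in> cutpts r d \<Phi> (fst c) (snd c)" "y < y'"
    "{y<..<y'} \<inter> K \<noteq> {}"
  using assms unfolding rchildren_def by blast

lemma cutpts_sub: "fst \<Delta> \<le> snd \<Delta> \<Longrightarrow> cutpts r d \<Phi> \<Delta> v \<subseteq> {fst \<Delta>..snd \<Delta>}"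
  unfolding cutpts_def by auto

lemma Ymaps_affine:
  assumes "Gd c" "g \<in> Ymaps r d \<Phi> (fst c) (snd c)"
  shows "g \<in> affine_bij"
proof -
  obtain f \<tau> where g: "g = Tint (fst c) \<circ> f \<circ> Sw r d \<tau>" "f \<in> snd c" "\<tau> \<in> \<Phi> (snd c) f"
    using assms(2) by (auto simp: Ymaps_iff)
  have "\<tau> \<in> lists I" using Phi_props(2)[of "snd c" f] assms(1) g by (auto simp: Gd_def)
  moreover have "Tint (fst c) \<in> affine_bij" using Tint_affine[of "fst c"] assms(1) by (simp add: Gd_def)
  moreover have "f \<in> affine_bij" using g(2) assms(1) by (auto simp: Gd_def)
  ultimately show ?thesis using g(1) Sw_affine by (auto intro!: affine_bij_comp)
qed

lemma rchild_Gd: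
  assumes G: "Gd c" and c': "c' \<in> rchildren r d \<Phi> K c"
  shows "Gd c'"
proof -
  obtain y y' where c'eq:
    "c' = ((y, y'), {Tinv (y, y') \<circ> g | g. g \<in> Ymaps r d \<Phi> (fst c) (snd c) \<and> g ` K \<inter> {y<..<y'} \<noteq> {}})"
    and yc: "y \<in> cutpts r d \<Phi> (fst c) (snd c)" and yc': "y' \<in> cutpts r d \<Phi> (fst c) (snd c)"
    and yy: "y < y'" and yK: "{y<..<y'} \<inter> K \<noteq> {}"
    by (rule rchildrenE[OF c'])
  define v' where "v' = {Tinv (y, y') \<circ> g | g. g \<in> Ymaps r d \<Phi> (fst c) (snd c) \<and> g ` K \<inter> {y<..<y'} \<noteq> {}}"
  have ab: "fst (fst c) < snd (fst c)" and finv: "finite (snd c)" and vaff: "snd c \<subseteq> affine_bij"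
    and cov: "\<forall>x\<in>K. x \<in> {fst (fst c)<..<snd (fst c)} \<longrightarrow> (\<exists>h\<in>snd c. \<exists>k\<in>K. x = Tint (fst c) (h k))"
    using G by (auto simp: Gd_def)
  have "cutpts r d \<Phi> (fst c) (snd c) \<subseteq> {fst (fst c)..snd (fst c)}" using cutpts_sub ab by simp
  then have "y \<in> {fst (fst c)..snd (fst c)}" "y' \<in> {fst (fst c)..snd (fst c)}" using yc yc' by blast+
  then have yab: "fst (fst c) \<le> y" "y' \<le> snd (fst c)" by auto
  have fin': "finite v'"
  proof -
    have "v' = (\<lambda>g. Tinv (y, y') \<circ> g) ` {g \<in> Ymaps r d \<Phi> (fst c) (snd c). g ` K \<inter> {y<..<y'} \<noteq> {}}"
      unfolding v'_def by auto
    then show ?thesis using Ymaps_fin[OF finv vaff] by simp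
  qed
  have aff': "v' \<subseteq> affine_bij"
    unfolding v'_def using Ymaps_affine[OF G] Tinv_affine[of "(y, y')"] yy
    by (auto intro!: affine_bij_comp)
  have pos': "\<forall>h\<in>v'. 0 < measure \<mu> (h -` {0<..<1})"
  proof
    fix h assume "h \<in> v'"
    then obtain g k where g: "h = Tinv (y, y') \<circ> g" "g \<in> Ymaps r d \<Phi> (fst c) (snd c)" "k \<in> K" "g k \<in> {y<..<y'}"
      unfolding v'_def by blast
    have "h k \<in> {0<..<1}" using Tinv_in01[OF yy g(4)] g(1) by simp
    then have kin: "k \<in> h -` {0<..<1}" by simp
    have hA: "h \<in> affine_bij" using \<open>h \<in> v'\<close> aff' by blast
    show "0 < measure \<mu> (h -` {0<..<1})"
      by (rule pos_open[OF affine_open_vimage[OF hA open_greaterThanLessThan] g(3) kin])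
  qed
  have cov': "\<forall>x\<in>K. x \<in> {y<..<y'} \<longrightarrow> (\<exists>h\<in>v'. \<exists>k\<in>K. x = Tint (y, y') (h k))"
  proof (intro ballI impI)
    fix x assume x: "x \<in> K" "x \<in> {y<..<y'}"
    then have "x \<in> {fst (fst c)<..<snd (fst c)}" using yab by auto
    then obtain f k where fk: "f \<in> snd c" "k \<in> K" "x = Tint (fst c) (f k)" using cov x by blast
    obtain \<tau> k' where tk: "\<tau> \<in> \<Phi> (snd c) f" "k' \<in> K" "k = Sw r d \<tau> k'"
      using cut_decomp[OF finv vaff fk(1) fk(2)] by blast
    define g where "g = Tint (fst c) \<circ> f \<circ> Sw r d \<tau>"
    have gY: "g \<in> Ymaps r d \<Phi> (fst c) (snd c)" using fk tk by (auto simp: Ymaps_iff g_def)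
    have gx: "g k' = x" using fk tk by (simp add: g_def)
    then have "g ` K \<inter> {y<..<y'} \<noteq> {}" using tk(2) x by blast
    then have "Tinv (y, y') \<circ> g \<in> v'" using gY unfolding v'_def by blast
    moreover have "x = Tint (y, y') ((Tinv (y, y') \<circ> g) k')" using Tint_Tinv_pt[OF yy] gx by simp
    ultimately show "\<exists>h\<in>v'. \<exists>k\<in>K. x = Tint (y, y') (h k)" using tk(2) by blast
  qed
  have ne': "v' \<noteq> {}" using yK cov' by blast
  show ?thesis unfolding Gd_def using c'eq yy fin' ne' aff' pos' cov' by (simp add: v'_def[symmetric])
qed

lemma root_Gd: "Gd ((0, 1), {id})"
proof -
  obtain x where x: "x \<in> K" "x \<in> {0<..<1}" using K_mid by blast
  have "0 < measure \<mu> {0<..<1::real}" using pos_open[of "{0<..<1}"] x by auto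
  moreover have "\<And>x. x = Tint (0, 1) (id x)" by (simp add: Tint_eq)
  ultimately show ?thesis by (auto simp: Gd_def id_affine)
qed

fun rch :: "npair \<Rightarrow> npair list \<Rightarrow> bool" where
  "rch c [] = True"
| "rch c (c' # cs) = (c' \<in> rchildren r d \<Phi> K c \<and> rch c' cs)"

lemma chain_rch: "is_chain r d \<Phi> K ch \<Longrightarrow> hd ch \<in> rchildren r d \<Phi> K c \<Longrightarrow> rch c ch"
proof (induction ch arbitrary: c)
  case Nil then show ?case by simp
next
  case (Cons c1 cs)
  show ?case
  proof (cases "cs = []")
    case True then show ?thesis using Cons by simp
  next
    case False
    have ch: "\<forall>i. Suc i < length (c1 # cs) \<longrightarrow> same_step r d \<Phi> K ((c1 # cs) ! i) ((c1 # cs) ! Suc i)"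
      "\<not> (\<exists>c'. same_step r d \<Phi> K (last (c1 # cs)) c')"
      using Cons.prems(1) by (auto simp: is_chain_def)
    have "is_chain r d \<Phi> K cs" unfolding is_chain_def
    proof (intro conjI allI impI)
      show "cs \<noteq> []" by (rule False)
      fix i assume "Suc i < length cs"
      then show "same_step r d \<Phi> K (cs ! i) (cs ! Suc i)" using ch(1)[rule_format, of "Suc i"] by simp
    next
      show "\<not> (\<exists>c'. same_step r d \<Phi> K (last cs) c')" using ch(2) False by simp
    qed
    moreover have "hd cs \<in> rchildren r d \<Phi> K c1"
    proof -
      have "same_step r d \<Phi> K c1 (cs ! 0)" using ch(1)[rule_format, of 0] False by simp
      then show ?thesis using False by (simp add: same_step_def hd_conv_nth)
    qed
    ultimately have "rch c1 cs" using Cons.IH by blast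
    then show ?thesis using Cons.prems(2) by simp
  qed
qed

lemma rch_Gd: "rch c ch \<Longrightarrow> Gd c \<Longrightarrow> \<forall>c'\<in>set ch. Gd c'"
proof (induction ch arbitrary: c)
  case Nil then show ?case by simp
next
  case (Cons c1 cs)
  have "c1 \<in> rchildren r d \<Phi> K c" "rch c1 cs" using Cons.prems(1) by auto
  then have "Gd c1" using rchild_Gd Cons.prems(2) by blast
  then show ?case using Cons.IH \<open>rch c1 cs\<close> by simp
qed

lemma gen_Gd: "c \<in> gen r d \<Phi> K n \<Longrightarrow> Gd c"
proof (induction n arbitrary: c)
  case 0 then show ?case using root_Gd by simp
next
  case (Suc n)
  then obtain c0 where c0: "c0 \<in> gen r d \<Phi> K n" "c \<in> children r d \<Phi> K c0" by auto
  then obtain ch where ch: "c = last ch" "is_chain r d \<Phi> K ch" "hd ch \<in> rchildren r d \<Phi> K c0"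
    by (auto simp: children_def)
  have "rch c0 ch" using chain_rch ch by blast
  moreover have "Gd c0" using Suc.IH c0 by blast
  moreover have "last ch \<in> set ch" using ch(2) by (simp add: is_chain_def)
  ultimately show ?case using rch_Gd ch(1) by blast
qed


lemma raw_nn:
  assumes "Gd c" "Gd c'"
  shows "0 \<le> rawmat \<mu> p r d \<Phi> c c' f g"
proof (cases "f \<in> snd c \<and> g \<in> snd c'")
  case True
  have sub: "\<Phi> (snd c) f \<subseteq> lists I" using Phi_props(2)[of "snd c" f] assms True by (auto simp: Gd_def)
  have "0 \<le> (\<Sum>\<omega> \<in> {\<omega> \<in> \<Phi> (snd c) f. Tint (fst c) \<circ> f \<circ> Sw r d \<omega> = Tint (fst c') \<circ> g}. pw p \<omega>)"
    using sub pw_nn by (intro sum_nonneg) blast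
  then show ?thesis using True by (simp add: rawmat_def)
next
  case False then show ?thesis unfolding rawmat_def by (subst if_not_P[OF False]) simp
qed

lemma raw_pos:
  assumes G: "Gd c" and c': "c' \<in> rchildren r d \<Phi> K c" and g: "g \<in> snd c'"
  shows "\<exists>f\<in>snd c. 0 < rawmat \<mu> p r d \<Phi> c c' f g"
proof -
  have G': "Gd c'" using rchild_Gd[OF G c'] .
  obtain y y' where c'eq:
    "c' = ((y, y'), {Tinv (y, y') \<circ> g | g. g \<in> Ymaps r d \<Phi> (fst c) (snd c) \<and> g ` K \<inter> {y<..<y'} \<noteq> {}})"
    and yy: "y < y'"
    by (rule rchildrenE[OF c'])
  obtain g0 where g0: "g = Tinv (y, y') \<circ> g0" "g0 \<in> Ymaps r d \<Phi> (fst c) (snd c)"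
    using g c'eq by auto
  obtain f \<tau> where f: "g0 = Tint (fst c) \<circ> f \<circ> Sw r d \<tau>" "f \<in> snd c" "\<tau> \<in> \<Phi> (snd c) f"
    using g0(2) by (auto simp: Ymaps_iff)
  have fin: "finite (\<Phi> (snd c) f)" and sub: "\<Phi> (snd c) f \<subseteq> lists I"
    using Phi_props[of "snd c" f] G f(2) by (auto simp: Gd_def)
  have "Tint (fst c') \<circ> g = g0" using c'eq g0(1) Tint_Tinv[of "(y, y')"] yy by simp
  then have tS: "\<tau> \<in> {\<omega> \<in> \<Phi> (snd c) f. Tint (fst c) \<circ> f \<circ> Sw r d \<omega> = Tint (fst c') \<circ> g}"
    using f by simp
  define S where "S = {\<omega> \<in> \<Phi> (snd c) f. Tint (fst c) \<circ> f \<circ> Sw r d \<omega> = Tint (fst c') \<circ> g}"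
  have finS: "finite S" using fin unfolding S_def by simp
  have nnS: "\<And>x. x \<in> S - {\<tau>} \<Longrightarrow> 0 \<le> pw p x" using sub pw_nn unfolding S_def by blast
  have "0 < pw p \<tau>" using pw_pos sub f(3) by blast
  also have "\<dots> \<le> (\<Sum>\<omega> \<in> S. pw p \<omega>)"
    using member_le_sum[of \<tau> S "pw p", OF tS[folded S_def] nnS finS] .
  finally have sp: "0 < (\<Sum>\<omega> \<in> {\<omega> \<in> \<Phi> (snd c) f. Tint (fst c) \<circ> f \<circ> Sw r d \<omega> = Tint (fst c') \<circ> g}. pw p \<omega>)"
    unfolding S_def .
  have m1: "0 < measure \<mu> (f -` {0<..<1})" using G f(2) by (auto simp: Gd_def)
  have m2: "0 < measure \<mu> (g -` {0<..<1})" using G' g by (auto simp: Gd_def)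
  have "0 < rawmat \<mu> p r d \<Phi> c c' f g"
    using f(2) g m1 m2 sp by (simp add: rawmat_def)
  then show ?thesis using f(2) by blast
qed

lemma chain_props:
  "rch c ch \<Longrightarrow> Gd c \<Longrightarrow> ch \<noteq> [] \<Longrightarrow>
    (\<forall>f h. 0 \<le> chainmat \<mu> p r d \<Phi> c ch f h) \<and>
    (\<forall>h\<in>snd (last ch). \<exists>f\<in>snd c. 0 < chainmat \<mu> p r d \<Phi> c ch f h)"
proof (induction ch arbitrary: c)
  case Nil then show ?case by simp
next
  case (Cons c1 cs)
  have c1: "c1 \<in> rchildren r d \<Phi> K c" and rc: "rch c1 cs" using Cons.prems by auto
  have G1: "Gd c1" using rchild_Gd[OF Cons.prems(2) c1] .
  have fin1: "finite (snd c1)" using G1 by (simp add: Gd_def)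
  have rnn: "\<And>f g. 0 \<le> rawmat \<mu> p r d \<Phi> c c1 f g" using raw_nn[OF Cons.prems(2) G1] .
  show ?case
  proof (cases "cs = []")
    case True
    have nn: "\<forall>f h. 0 \<le> chainmat \<mu> p r d \<Phi> c (c1 # cs) f h"
      using True rnn by (auto simp: mmul_def idm_def intro!: sum_nonneg)
    have pos: "\<forall>h\<in>snd (last (c1 # cs)). \<exists>f\<in>snd c. 0 < chainmat \<mu> p r d \<Phi> c (c1 # cs) f h"
    proof
      fix h assume "h \<in> snd (last (c1 # cs))"
      then have h: "h \<in> snd c1" using True by simp
      obtain f where f: "f \<in> snd c" "0 < rawmat \<mu> p r d \<Phi> c c1 f h"
        using raw_pos[OF Cons.prems(2) c1 h] by blast
      have "rawmat \<mu> p r d \<Phi> c c1 f h * idm h h \<le> (\<Sum>g\<in>snd c1. rawmat \<mu> p r d \<Phi> c c1 f g * idm g h)"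
        using fin1 h rnn by (intro member_le_sum) (auto simp: idm_def)
      then have "0 < chainmat \<mu> p r d \<Phi> c (c1 # cs) f h" using f True by (simp add: mmul_def idm_def)
      then show "\<exists>f\<in>snd c. 0 < chainmat \<mu> p r d \<Phi> c (c1 # cs) f h" using f(1) by blast
    qed
    show ?thesis using nn pos by blast
  next
    case False
    have IH: "(\<forall>f h. 0 \<le> chainmat \<mu> p r d \<Phi> c1 cs f h) \<and>
      (\<forall>h\<in>snd (last cs). \<exists>f\<in>snd c1. 0 < chainmat \<mu> p r d \<Phi> c1 cs f h)"
      using Cons.IH[OF rc G1 False] .
    have nn: "\<forall>f h. 0 \<le> chainmat \<mu> p r d \<Phi> c (c1 # cs) f h"
      using IH rnn by (auto simp: mmul_def intro!: sum_nonneg)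
    have pos: "\<forall>h\<in>snd (last (c1 # cs)). \<exists>f\<in>snd c. 0 < chainmat \<mu> p r d \<Phi> c (c1 # cs) f h"
    proof
      fix h assume "h \<in> snd (last (c1 # cs))"
      then have h: "h \<in> snd (last cs)" using False by simp
      obtain g where g: "g \<in> snd c1" "0 < chainmat \<mu> p r d \<Phi> c1 cs g h" using IH h by blast
      obtain f where f: "f \<in> snd c" "0 < rawmat \<mu> p r d \<Phi> c c1 f g"
        using raw_pos[OF Cons.prems(2) c1 g(1)] by blast
      have "0 < rawmat \<mu> p r d \<Phi> c c1 f g * chainmat \<mu> p r d \<Phi> c1 cs g h" using f g by simp
      also have "\<dots> \<le> (\<Sum>g\<in>snd c1. rawmat \<mu> p r d \<Phi> c c1 f g * chainmat \<mu> p r d \<Phi> c1 cs g h)"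
        using fin1 g(1) rnn IH by (intro member_le_sum) auto
      finally have "0 < chainmat \<mu> p r d \<Phi> c (c1 # cs) f h" by (simp add: mmul_def)
      then show "\<exists>f\<in>snd c. 0 < chainmat \<mu> p r d \<Phi> c (c1 # cs) f h" using f(1) by blast
    qed
    show ?thesis using nn pos by blast
  qed
qed

lemma tedgesE:
  assumes "e \<in> tedges \<mu> p r d \<Phi> K"
  obtains n c ch where "e = (snd c, relpos (fst c) (fst (last ch)), snd (last ch),
       (\<lambda>f g. if f \<in> snd c \<and> g \<in> snd (last ch) then chainmat \<mu> p r d \<Phi> c ch f g else 0))"
    "c \<in> gen r d \<Phi> K n" "is_chain r d \<Phi> K ch" "hd ch \<in> rchildren r d \<Phi> K c"
  using assms unfolding tedges_def by blast

lemma absG_inst: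
  assumes fnc: "Phi_FNC \<mu> p r d \<Phi> K"
    and sing: "\<forall>L. loop_class (tverts r d \<Phi> K) (tedges \<mu> p r d \<Phi> K) L
              \<and> \<not> essential (tverts r d \<Phi> K) (tedges \<mu> p r d \<Phi> K) L
              \<longrightarrow> (\<forall>v\<in>L. card v = 1)"
  shows "absG (tverts r d \<Phi> K) (tedges \<mu> p r d \<Phi> K)"
proof -
  have edge: "esrc e \<in> tverts r d \<Phi> K \<and> etgt e \<in> tverts r d \<Phi> K \<and>
     (\<forall>f g. 0 \<le> emat e f g) \<and> (\<forall>f g. emat e f g \<noteq> 0 \<longrightarrow> f \<in> esrc e \<and> g \<in> etgt e) \<and>
     (\<forall>g\<in>etgt e. 0 < (\<Sum>f\<in>esrc e. emat e f g))"
    if e: "e \<in> tedges \<mu> p r d \<Phi> K" for e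
  proof -
    obtain n c ch where eq: "e = (snd c, relpos (fst c) (fst (last ch)), snd (last ch),
       (\<lambda>f g. if f \<in> snd c \<and> g \<in> snd (last ch) then chainmat \<mu> p r d \<Phi> c ch f g else 0))"
      and c: "c \<in> gen r d \<Phi> K n" and ch: "is_chain r d \<Phi> K ch" "hd ch \<in> rchildren r d \<Phi> K c"
      by (rule tedgesE[OF e])
    have Gc: "Gd c" using gen_Gd[OF c] .
    have ne: "ch \<noteq> []" using ch by (simp add: is_chain_def)
    have cp: "(\<forall>f h. 0 \<le> chainmat \<mu> p r d \<Phi> c ch f h) \<and>
      (\<forall>h\<in>snd (last ch). \<exists>f\<in>snd c. 0 < chainmat \<mu> p r d \<Phi> c ch f h)"
      using chain_props[OF chain_rch[OF ch] Gc ne] .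
    have s: "esrc e = snd c" "etgt e = snd (last ch)"
      "emat e = (\<lambda>f g. if f \<in> snd c \<and> g \<in> snd (last ch) then chainmat \<mu> p r d \<Phi> c ch f g else 0)"
      using eq by (auto simp: esrc_def etgt_def emat_def)
    have v1: "snd c \<in> tverts r d \<Phi> K" using c unfolding tverts_def by blast
    have "last ch \<in> children r d \<Phi> K c" using ch unfolding children_def by blast
    then have "last ch \<in> gen r d \<Phi> K (Suc n)" using c by auto
    then have v2: "snd (last ch) \<in> tverts r d \<Phi> K" unfolding tverts_def by blast
    have finc: "finite (snd c)" using Gc by (simp add: Gd_def)
    have col: "\<forall>g\<in>etgt e. 0 < (\<Sum>f\<in>esrc e. emat e f g)"
    proof
      fix g assume "g \<in> etgt e"
      then have g: "g \<in> snd (last ch)" using s by simp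
      obtain f where f: "f \<in> snd c" "0 < chainmat \<mu> p r d \<Phi> c ch f g" using cp g by blast
      have "emat e f g \<le> (\<Sum>f\<in>esrc e. emat e f g)"
        using finc f(1) cp s by (intro member_le_sum) auto
      moreover have "0 < emat e f g" using f g s by simp
      ultimately show "0 < (\<Sum>f\<in>esrc e. emat e f g)" by linarith
    qed
    show ?thesis using s v1 v2 cp col by auto
  qed
  have vt: "finite v \<and> v \<noteq> {}" if "v \<in> tverts r d \<Phi> K" for v
    using that gen_Gd unfolding tverts_def Gd_def by blast
  show ?thesis
    by (unfold_locales) (use fnc sing edge vt in \<open>auto simp: Phi_FNC_def\<close>)
qed

end

theorem main_thm:
  fixes I :: "'i set" and r d p :: "'i \<Rightarrow> real" and K :: "real set"
    and \<mu> :: "real measure" and \<Phi> :: "amap set \<Rightarrow> amap \<Rightarrow> 'i list set"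
  assumes "finite I" and "I \<noteq> {}"
    and "\<forall>i\<in>I. 0 < \<bar>r i\<bar> \<and> \<bar>r i\<bar> < 1"
    and "\<forall>i\<in>I. 0 < p i" and "(\<Sum>i\<in>I. p i) = 1"
    and "compact K" and "K \<noteq> {}" and "K = (\<Union>i\<in>I. Smap r d i ` K)"
    and "\<not> (\<exists>x. K = {x})" and "convex hull K = {0..1}"
    and "prob_space \<mu>" and "sets \<mu> = sets borel"
    and "\<forall>E \<in> sets borel. measure \<mu> E = (\<Sum>i\<in>I. p i * measure \<mu> (Smap r d i -` E))"
    and "iteration_rule I r d K \<Phi>"
    and "Phi_FNC \<mu> p r d \<Phi> K"
    and "\<forall>L. loop_class (tverts r d \<Phi> K) (tedges \<mu> p r d \<Phi> K) L
              \<and> \<not> essential (tverts r d \<Phi> K) (tedges \<mu> p r d \<Phi> K) L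
              \<longrightarrow> (\<forall>v\<in>L. card v = 1)"
  shows "decomposable (tverts r d \<Phi> K) (tedges \<mu> p r d \<Phi> K)"
proof -
  interpret conc I r d p K \<mu> \<Phi>
    using assms unfolding conc_def by blast
  interpret absG "tverts r d \<Phi> K" "tedges \<mu> p r d \<Phi> K"
    using absG_inst assms by blast
  show ?thesis by (rule decomp)
qed




theorem lemma4p10:
  fixes I :: "'i set" and r d p :: "'i \<Rightarrow> real" and K :: "real set"
    and \<mu> :: "real measure" and \<Phi> :: "amap set \<Rightarrow> amap \<Rightarrow> 'i list set"
  assumes "finite I" and "I \<noteq> {}"
    and "\<forall>i\<in>I. 0 < \<bar>r i\<bar> \<and> \<bar>r i\<bar> < 1"
    and "\<forall>i\<in>I. 0 < p i" and "(\<Sum>i\<in>I. p i) = 1"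
    and "compact K" and "K \<noteq> {}" and "K = (\<Union>i\<in>I. Smap r d i ` K)"
    and "\<not> (\<exists>x. K = {x})" and "convex hull K = {0..1}"
    and "prob_space \<mu>" and "sets \<mu> = sets borel"
    and "\<forall>E \<in> sets borel. measure \<mu> E = (\<Sum>i\<in>I. p i * measure \<mu> (Smap r d i -` E))"
    and "iteration_rule I r d K \<Phi>"
    and "Phi_FNC \<mu> p r d \<Phi> K"
    and "\<forall>L. loop_class (tverts r d \<Phi> K) (tedges \<mu> p r d \<Phi> K) L
              \<and> \<not> essential (tverts r d \<Phi> K) (tedges \<mu> p r d \<Phi> K) L
              \<longrightarrow> (\<forall>v\<in>L. card v = 1)"
  shows "decomposable (tverts r d \<Phi> K) (tedges \<mu> p r d \<Phi> K)"
  by (rule main_thm[OF assms])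


end
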